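(* Let $A_0,A_1,A_2,\ldots$ be complex random variables on a common probability space (not necessarily independent, not necessarily identically distributed) satisfying Assumptions 1 and 2 below. Let $P_n(z)=\sum_{k=0}^n A_k z^k$, $n\in\mathbb N$, and let $\tau_n$ be the zero counting measure of $P_n$. Then, almost surely, $\tau_n$ converges weakly to $\mu_{\mathbb T}$ as $n\to\infty$, where $d\mu_{\mathbb T}(e^{i\theta})=d\theta/(2\pi)$ is the normalized arclength measure on the unit circle $\mathbb T$. Assumption 1: there are $a>1$ and a decreasing function $f:[a,\infty)\to[0,1]$ with $\int_a^\infty \frac{f(x)}{x}\,dx<\infty$ and $1-F_k(x)\le f(x)$ for all $x\in[a,\infty)$ and all $k\ge 0$. Assumption 2: there are $0<b<1$ and an increasing function $g:[0,b]\to[0,1]$ with $\int_0^b \frac{g(x)}{x}\,dx<\infty$ and $F_k(x)\le g(x)$ for all $x\in[0,b]$ and all $k\ge0$.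
   Context: $F_k(x)=\mathbb P(|A_k|\le x)$ denotes the distribution function of $|A_k|$. For a polynomial $P_n$ of degree $n$ with zeros $Z_1,\dots,Z_n$ (listed with multiplicity), its zero counting measure is $\tau_n=\frac1n\sum_{j=1}^n\delta_{Z_j}$. (Assumption 2 forces $\mathbb P(A_n=0)=0$, so $P_n$ has degree $n$ almost surely.) *)

theory Defs
  imports "HOL-Probability.Probability" "HOL-Computational_Algebra.Polynomial"
begin

definition rand_poly :: "(nat \<Rightarrow> 'a \<Rightarrow> complex) \<Rightarrow> nat \<Rightarrow> 'a \<Rightarrow> complex poly" where
  "rand_poly A n \<omega> = (\<Sum>k\<le>n. monom (A k \<omega>) k)"

definition zero_counting_measure :: "nat \<Rightarrow> complex poly \<Rightarrow> complex measure" where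
  "zero_counting_measure n p = measure_of UNIV (sets borel)
     (\<lambda>S. ennreal ((\<Sum>z\<in>{z. poly p z = 0} \<inter> S. real (order z p)) / real n))"

definition unit_circle_measure :: "complex measure" where
  "unit_circle_measure = distr (uniform_measure lborel {0..2*pi}) borel cis"

definition weak_conv_c :: "(nat \<Rightarrow> complex measure) \<Rightarrow> complex measure \<Rightarrow> bool" where
  "weak_conv_c \<mu>s \<mu> \<longleftrightarrow> (\<forall>f :: complex \<Rightarrow> real. continuous_on UNIV f \<and> bounded (range f) \<longrightarrow>
      (\<lambda>n. integral\<^sup>L (\<mu>s n) f) \<longlonglongrightarrow> integral\<^sup>L \<mu> f)"

definition dist_fun :: "'a measure \<Rightarrow> (nat \<Rightarrow> 'a \<Rightarrow> complex) \<Rightarrow> nat \<Rightarrow> real \<Rightarrow> real" where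
  "dist_fun M A k x = measure M {\<omega>\<in>space M. cmod (A k \<omega>) \<le> x}"

end

theory Submission
  imports Defs "HOL-Complex_Analysis.Complex_Analysis" "HOL-Computational_Algebra.Fundamental_Theorem_Algebra" "HOL-Real_Asymp.Real_Asymp"
begin


lemma has_vd_cis_scaled:
  fixes x :: real assumes "x \<noteq> 0"
  shows "((\<lambda>t. cis (x*t) / (\<i> * of_real x)) has_vector_derivative cis (x*t)) (at t within S)"
proof -
  have "((\<lambda>t. cis (x*t)) has_derivative (\<lambda>h. (x*h) *\<^sub>R (\<i> * cis (x*t)))) (at t within S)"
    by (auto intro!: derivative_eq_intros)
  then have "((\<lambda>t. cis (x*t)) has_vector_derivative (x *\<^sub>R (\<i> * cis (x*t)))) (at t within S)"
    by (simp add: has_vector_derivative_def mult.commute)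
  then have "((\<lambda>t. cis (x*t) / (\<i> * of_real x)) has_vector_derivative (x *\<^sub>R (\<i> * cis (x*t))) / (\<i> * of_real x)) (at t within S)"
    by (intro derivative_intros)
  then show ?thesis using assms by (simp add: scaleR_conv_of_real field_simps)
qed

lemma int_cis_zero:
  fixes x :: real assumes "x \<in> \<int>" "x \<noteq> 0"
  shows "((\<lambda>t. cis (x*t)) has_integral 0) {0..2*pi}"
proof -
  have "((\<lambda>t. cis (x*t)) has_integral (cis (x*(2*pi)) / (\<i> * of_real x) - cis (x*0) / (\<i> * of_real x))) {0..2*pi}"
    by (rule fundamental_theorem_of_calculus) (use assms has_vd_cis_scaled in auto)
  moreover have "cis (x*(2*pi)) = 1" using assms(1) cis_multiple_2pi[of x] by (simp add: mult.commute mult.left_commute)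
  ultimately show ?thesis by simp
qed

lemma int_cis_const: "((\<lambda>t. cis (0*t)) has_integral (2*pi)) {0..2*pi}"
  using has_integral_const_real[of "1::complex" 0 "2*pi"] by (simp add: scaleR_conv_of_real)

lemma int_T_term:
  fixes a :: complex and k m :: nat
  shows "((\<lambda>t. - of_real (Re (a^k * cis (real k * t)) / real k) * cis (- (real m * t)))
          has_integral (if k = m \<and> m \<noteq> 0 then - of_real pi * a^m / of_nat m else 0)) {0..2*pi}"
proof (cases "k = 0")
  case True
  then show ?thesis by simp
next
  case False
  have eq: "- of_real (Re (a^k * cis (real k * t)) / real k) * cis (- (real m * t))
     = (- 1 / (2 * of_nat k)) * (a^k * cis ((real k - real m) * t) + cnj a ^ k * cis ((- real k - real m) * t))" for t
  proof -
    have r0: "of_real (Re z) = (z + cnj z)/2" for z :: complex by (simp add: complex_add_cnj)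
    have "of_real (Re (a^k * cis (real k * t))) = (a^k * cis (real k * t) + cnj (a^k * cis (real k * t))) / 2"
      by (rule r0)
    also have "cnj (a^k * cis (real k * t)) = cnj a ^ k * cis (- (real k * t))" by (simp add: cis_cnj)
    finally have r: "of_real (Re (a^k * cis (real k * t))) = (a^k * cis (real k * t) + cnj a ^ k * cis (- (real k * t))) / 2" .
    have "- of_real (Re (a^k * cis (real k * t)) / real k) * cis (- (real m * t))
        = - (of_real (Re (a^k * cis (real k * t))) / of_nat k) * cis (- (real m * t))" by simp
    also have "\<dots> = (- 1 / (2 * of_nat k)) * (a^k * (cis (real k * t) * cis (- (real m * t))) + cnj a ^ k * (cis (- (real k * t)) * cis (- (real m * t))))"
      unfolding r by (simp add: field_simps)
    also have "\<dots> = (- 1 / (2 * of_nat k)) * (a^k * cis ((real k - real m) * t) + cnj a ^ k * cis ((- real k - real m) * t))"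
      by (simp add: cis_mult algebra_simps)
    finally show ?thesis .
  qed
  have i2: "((\<lambda>t. cis ((- real k - real m) * t)) has_integral 0) {0..2*pi}"
    by (rule int_cis_zero) (use False in auto)
  have i1: "((\<lambda>t. cis ((real k - real m) * t)) has_integral (if k = m then 2*pi else 0)) {0..2*pi}"
  proof (cases "k = m")
    case True then show ?thesis using int_cis_const by simp
  next
    case False then show ?thesis by (simp add: int_cis_zero)
  qed
  have "((\<lambda>t. (- 1 / (2 * of_nat k)) * (a^k * cis ((real k - real m) * t) + cnj a ^ k * cis ((- real k - real m) * t)))
     has_integral ((- 1 / (2 * of_nat k)) * (a^k * (if k = m then 2*pi else 0) + cnj a ^ k * 0))) {0..2*pi}"
    by (intro has_integral_mult_right has_integral_add i1 i2)
  then show ?thesis using False unfolding eq by (auto simp: field_simps)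
qed

lemma fourier_log:
  fixes a :: complex and m :: nat
  assumes a: "cmod a \<le> 1/2"
  shows "((\<lambda>t. of_real (ln (cmod (1 - a * cis t))) * cis (- (real m * t)))
          has_integral (if m = 0 then 0 else - of_real pi * a^m / of_nat m)) {0..2*pi}"
proof -
  define T where "T k t = - of_real (Re (a^k * cis (real k * t)) / real k) * cis (- (real m * t))" for k t
  define F where "F t = of_real (ln (cmod (1 - a * cis t))) * cis (- (real m * t))" for t
  have sums: "(\<lambda>k. T k t) sums F t" for t
  proof -
    have n1: "cmod (- (a * cis t)) < 1" using a by (simp add: norm_mult)
    have "(\<lambda>k. - ((- (- (a * cis t)))^k) / of_nat k) sums Ln (1 + - (a * cis t))"
      by (rule Ln_series'[OF n1])
    then have "(\<lambda>k. - ((a * cis t)^k) / of_nat k) sums Ln (1 - a * cis t)" by simp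
    then have "(\<lambda>k. Re (- ((a * cis t)^k) / of_nat k)) sums Re (Ln (1 - a * cis t))" by (rule sums_Re)
    moreover have "1 - a * cis t \<noteq> 0"
    proof
      assume "1 - a * cis t = 0"
      then have "a * cis t = 1" by simp
      then have "cmod (a * cis t) = 1" by simp
      then show False using a by (simp add: norm_mult)
    qed
    ultimately have "(\<lambda>k. Re (- ((a * cis t)^k) / of_nat k)) sums ln (cmod (1 - a * cis t))" by simp
    moreover have "Re (- ((a * cis t)^k) / of_nat k) = - (Re (a^k * cis (real k * t)) / real k)" for k
    proof -
      have "(a * cis t)^k = a^k * cis (real k * t)" by (simp only: power_mult_distrib Complex.DeMoivre)
      moreover have "Re (- z / of_nat k) = - (Re z / real k)" for z :: complex
        by (simp add: Re_divide_of_nat)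
      ultimately show ?thesis by (simp only:)
    qed
    ultimately have "(\<lambda>k. - (Re (a^k * cis (real k * t)) / real k)) sums ln (cmod (1 - a * cis t))" by (simp only:)
    then have "(\<lambda>k. of_real (- (Re (a^k * cis (real k * t)) / real k))) sums (of_real (ln (cmod (1 - a * cis t))) :: complex)"
      by (rule sums_of_real)
    then have "(\<lambda>k. of_real (- (Re (a^k * cis (real k * t)) / real k)) * cis (- (real m * t))) sums F t"
      unfolding F_def by (rule sums_mult2)
    then show ?thesis unfolding T_def by simp
  qed
  have bound: "norm (T k t) \<le> (1/2)^k" for k t
  proof (cases "k = 0")
    case True then show ?thesis by (simp add: T_def)
  next
    case False
    have "norm (T k t) = \<bar>Re (a^k * cis (real k * t)) / real k\<bar>" unfolding T_def
      by (simp only: norm_mult norm_minus_cancel norm_of_real norm_cis mult_1_right)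
    also have "\<dots> = \<bar>Re (a^k * cis (real k * t))\<bar> / real k" by simp
    also have "\<dots> \<le> \<bar>Re (a^k * cis (real k * t))\<bar>" using False
      using divide_left_mono[of 1 "real k" "\<bar>Re (a^k * cis (real k * t))\<bar>"] by simp
    also have "\<dots> \<le> cmod (a^k * cis (real k * t))" by (rule abs_Re_le_cmod)
    also have "\<dots> = cmod a ^ k" by (simp add: norm_mult norm_power)
    also have "\<dots> \<le> (1/2)^k" using a by (intro power_mono) auto
    finally show ?thesis .
  qed
  have ul: "uniform_limit {0..2*pi} (\<lambda>n t. \<Sum>k<n. T k t) (\<lambda>t. suminf (\<lambda>k. T k t)) sequentially"
    by (rule Weierstrass_m_test[OF bound]) (simp add: summable_geometric)
  have "(\<lambda>t. suminf (\<lambda>k. T k t)) = F" using sums sums_unique by (metis ext)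
  then have ul2: "uniform_limit {0..2*pi} (\<lambda>n t. \<Sum>k<n. T k t) F sequentially" using ul by simp
  have contk: "continuous_on {0..2*pi} (T k)" for k
  proof (cases "k = 0")
    case True then show ?thesis by (simp add: T_def[abs_def])
  next
    case False then show ?thesis unfolding T_def[abs_def] by (intro continuous_intros) auto
  qed
  have cont: "continuous_on {0..2*pi} (\<lambda>t. \<Sum>k<n. T k t)" for n
    by (intro continuous_on_sum contk)
  obtain I J where I: "\<And>n. ((\<lambda>t. \<Sum>k<n. T k t) has_integral I n) {0..2*pi}"
    and J: "(F has_integral J) {0..2*pi}" and IJ: "I \<longlonglongrightarrow> J"
    by (rule uniform_limit_integral[OF ul2 cont]) auto
  define c where "c = (if m = 0 then 0 else - of_real pi * a^m / of_nat m)"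
  have In: "I n = (if m < n then c else 0)" for n
  proof -
    have "((\<lambda>t. \<Sum>k<n. T k t) has_integral (\<Sum>k<n. (if k = m \<and> m \<noteq> 0 then - of_real pi * a^m / of_nat m else 0))) {0..2*pi}"
      unfolding T_def by (intro has_integral_sum int_T_term) auto
    moreover have "(\<Sum>k<n. (if k = m \<and> m \<noteq> 0 then - of_real pi * a^m / of_nat m else 0)) = (if m < n then c else 0)"
      by (auto simp: c_def sum.delta)
    ultimately show ?thesis using I has_integral_unique by metis
  qed
  have "eventually (\<lambda>n. I n = c) sequentially"
    using eventually_gt_at_top[of m] by eventually_elim (simp add: In)
  then have "I \<longlonglongrightarrow> c" by (rule tendsto_eventually)
  then have "J = c" using IJ LIMSEQ_unique by blast
  then show ?thesis using J unfolding F_def c_def by simp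
qed

lemma moment_bound:
  fixes w :: "nat \<Rightarrow> complex" and n m :: nat and E :: real
  assumes w: "\<And>i. i < n \<Longrightarrow> cmod (w i) \<le> 1" and m: "m \<ge> 1" and E: "E \<ge> 1"
    and Q: "\<And>\<zeta>. cmod \<zeta> \<le> 1 \<Longrightarrow> cmod (\<Prod>i<n. (1 - w i * \<zeta>)) \<le> E"
  shows "cmod (\<Sum>i<n. w i ^ m) \<le> 4 * m * 2^m * ln E"
proof -
  define a where "a i = w i / 2" for i
  have a: "cmod (a i) \<le> 1/2" if "i < n" for i using w[OF that] by (simp add: a_def)
  define H where "H t = (\<Sum>i<n. ln (cmod (1 - a i * cis t)))" for t
  have nz: "1 - a i * cis t \<noteq> 0" if "i < n" for i t
  proof
    assume "1 - a i * cis t = 0"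
    then have "cmod (a i * cis t) = 1" by (metis eq_iff_diff_eq_0 norm_one)
    then show False using a[OF that] by (simp add: norm_mult)
  qed
  have HQ: "H t = ln (cmod (\<Prod>i<n. (1 - w i * (cis t / 2))))" for t
  proof -
    have "cmod (\<Prod>i<n. (1 - w i * (cis t / 2))) = (\<Prod>i<n. cmod (1 - a i * cis t))"
      by (simp add: prod_norm a_def)
    also have "ln \<dots> = H t" unfolding H_def by (rule ln_prod) (use nz in auto)
    finally show ?thesis by simp
  qed
  have Hle: "H t \<le> ln E" for t
  proof -
    have "(\<Prod>i<n. cmod (1 - a i * cis t)) > 0" using nz by (intro prod_pos) auto
    then have pos: "cmod (\<Prod>i<n. (1 - w i * (cis t / 2))) > 0"
      by (simp add: prod_norm a_def)
    have le: "cmod (\<Prod>i<n. (1 - w i * (cis t / 2))) \<le> E" by (rule Q) simp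
    show ?thesis unfolding HQ using pos E le by (subst ln_le_cancel_iff) auto
  qed
  have intm: "((\<lambda>t. of_real (H t) * cis (- (real k * t))) has_integral
       (\<Sum>i<n. (if k = 0 then 0 else - of_real pi * a i ^ k / of_nat k))) {0..2*pi}" for k
  proof -
    have "((\<lambda>t. \<Sum>i<n. of_real (ln (cmod (1 - a i * cis t))) * cis (- (real k * t))) has_integral
       (\<Sum>i<n. (if k = 0 then 0 else - of_real pi * a i ^ k / of_nat k))) {0..2*pi}"
      by (intro has_integral_sum fourier_log a) auto
    moreover have "(\<Sum>i<n. of_real (ln (cmod (1 - a i * cis t))) * cis (- (real k * t))) = of_real (H t) * cis (- (real k * t))" for t
      by (simp add: H_def sum_distrib_right)
    ultimately show ?thesis by simp
  qed
  have H0: "(H has_integral 0) {0..2*pi}"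
  proof -
    have "((\<lambda>t. of_real (H t) :: complex) has_integral 0) {0..2*pi}" using intm[of 0] by simp
    from has_integral_linear[OF this bounded_linear_Re] show ?thesis by (simp add: o_def)
  qed
  have Hint: "H integrable_on {0..2*pi}" using H0 by blast
  have f_int: "(\<lambda>t. of_real (H t) * cis (- (real m * t))) integrable_on {0..2*pi}" using intm by blast
  have g_int: "(\<lambda>t. 2 * ln E - H t) integrable_on {0..2*pi}"
    by (intro integrable_diff Hint integrable_const_ivl)
  have "norm (integral {0..2*pi} (\<lambda>t. of_real (H t) * cis (- (real m * t)))) \<le> integral {0..2*pi} (\<lambda>t. 2 * ln E - H t)"
  proof (rule integral_norm_bound_integral[OF f_int g_int])
    fix t assume "t \<in> {0..2*pi}"
    have "ln E \<ge> 0" using E by simp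
    then have "\<bar>H t\<bar> \<le> 2 * ln E - H t" using Hle[of t] by linarith
    then show "norm (of_real (H t) * cis (- (real m * t))) \<le> 2 * ln E - H t" by (simp add: norm_mult)
  qed
  also have "integral {0..2*pi} (\<lambda>t. 2 * ln E - H t) = 2 * ln E * (2 * pi) - 0"
    by (subst integral_diff) (use Hint H0 in \<open>auto simp: integral_unique\<close>)
  finally have "norm (\<Sum>i<n. (if m = 0 then 0 else - of_real pi * a i ^ m / of_nat m)) \<le> 4 * pi * ln E"
    using integral_unique[OF intm[of m]] by (simp add: mult_ac)
  moreover have "(\<Sum>i<n. (if m = 0 then 0 else - of_real pi * a i ^ m / of_nat m)) = - (of_real pi / (of_nat m * 2^m)) * (\<Sum>i<n. w i ^ m)"
    using m by (simp add: a_def sum_distrib_left power_divide field_simps sum_negf)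
  ultimately have "pi / (real m * 2^m) * cmod (\<Sum>i<n. w i ^ m) \<le> 4 * pi * ln E"
    by (simp add: norm_mult norm_divide norm_power)
  then have "cmod (\<Sum>i<n. w i ^ m) \<le> 4 * pi * ln E * (real m * 2^m) / pi"
    using m by (simp add: field_simps)
  then show ?thesis by (simp add: field_simps)
qed

lemma factor_norm_circle:
  fixes r \<zeta> :: complex
  assumes r: "r \<noteq> 0" and z: "cmod \<zeta> = 1"
  shows "cmod (1 - (if cmod r \<le> 1 then r else 1 / cnj r) * \<zeta>) = cmod (cnj \<zeta> - r) / max 1 (cmod r)"
proof -
  have zz: "cnj \<zeta> * \<zeta> = 1"
    using complex_norm_square[of \<zeta>] z by (simp add: mult.commute)
  show ?thesis
  proof (cases "cmod r \<le> 1")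
    case True
    have "1 - r * \<zeta> = \<zeta> * (cnj \<zeta> - r)" using zz by (simp add: algebra_simps)
    then have "cmod (1 - r * \<zeta>) = cmod (cnj \<zeta> - r)" using z by (simp add: norm_mult)
    then show ?thesis using True by simp
  next
    case False
    have cr: "cnj r \<noteq> 0" using r by simp
    have "1 - 1 / cnj r * \<zeta> = (cnj r - \<zeta>) / cnj r" using cr by (simp add: field_simps)
    moreover have "cmod (cnj r - \<zeta>) = cmod (cnj \<zeta> - r)"
      by (metis complex_cnj_cnj complex_cnj_diff complex_mod_cnj norm_minus_commute)
    ultimately have "cmod (1 - 1 / cnj r * \<zeta>) = cmod (cnj \<zeta> - r) / cmod r" by (simp add: norm_divide)
    then show ?thesis using False by simp
  qed
qed

lemma Q_bound:
  fixes r :: "nat \<Rightarrow> complex" and c :: complex and L :: real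
  assumes r: "\<And>i. i<n \<Longrightarrow> r i \<noteq> 0" and c: "c \<noteq> 0"
    and L: "\<And>\<zeta>. cmod \<zeta> = 1 \<Longrightarrow> cmod (c * (\<Prod>i<n. (\<zeta> - r i))) \<le> L"
    and z: "cmod \<zeta> \<le> 1"
  shows "cmod (\<Prod>i<n. (1 - (if cmod (r i) \<le> 1 then r i else 1 / cnj (r i)) * \<zeta>))
           \<le> L / (cmod c * (\<Prod>i<n. max 1 (cmod (r i))))"
proof -
  define w where "w i = (if cmod (r i) \<le> 1 then r i else 1 / cnj (r i))" for i
  define Mf where "Mf = (\<Prod>i<n. max 1 (cmod (r i)))"
  have Mf: "Mf > 0" unfolding Mf_def by (intro prod_pos) auto
  have circ: "cmod (\<Prod>i<n. (1 - w i * \<xi>)) \<le> L / (cmod c * Mf)" if "\<xi> \<in> frontier (cball 0 1)" for \<xi>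
  proof -
    have x1: "cmod \<xi> = 1" using that by simp
    have cx: "cmod (cnj \<xi>) = 1" using x1 by simp
    have "cmod (\<Prod>i<n. (1 - w i * \<xi>)) = (\<Prod>i<n. cmod (cnj \<xi> - r i) / max 1 (cmod (r i)))"
      unfolding prod_norm[symmetric] w_def by (intro prod.cong refl factor_norm_circle r x1) auto
    also have "\<dots> = (\<Prod>i<n. cmod (cnj \<xi> - r i)) / Mf"
      unfolding Mf_def by (simp add: prod_dividef)
    also have "\<dots> = cmod (c * (\<Prod>i<n. (cnj \<xi> - r i))) / (cmod c * Mf)"
      using c by (simp add: norm_mult prod_norm)
    also have "\<dots> \<le> L / (cmod c * Mf)"
      using L[OF cx] Mf c by (intro divide_right_mono) auto
    finally show ?thesis .
  qed
  have "cmod (\<Prod>i<n. (1 - w i * \<zeta>)) \<le> L / (cmod c * Mf)"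
    by (rule maximum_modulus_frontier[where S = "cball 0 1"])
       (use circ z in \<open>auto intro!: holomorphic_intros continuous_intros\<close>)
  then show ?thesis unfolding w_def Mf_def .
qed

lemma poly_core:
  fixes r :: "nat \<Rightarrow> complex" and c :: complex and L :: real
  assumes r: "\<And>i. i<n \<Longrightarrow> r i \<noteq> 0" and c: "c \<noteq> 0"
    and L: "\<And>\<zeta>. cmod \<zeta> = 1 \<Longrightarrow> cmod (c * (\<Prod>i<n. (\<zeta> - r i))) \<le> L"
  shows "cmod c * (\<Prod>i<n. max 1 (cmod (r i))) \<le> L"
    and "(\<Sum>i<n. ln (max 1 (cmod (r i)))) \<le> ln (L / cmod c)"
    and "m \<ge> 1 \<Longrightarrow> cmod (\<Sum>i<n. (if cmod (r i) \<le> 1 then r i else 1 / cnj (r i)) ^ m) \<le> 4 * real m * 2^m * ln (L / cmod c)"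
    and "(\<Sum>i<n. \<bar>ln (cmod (r i))\<bar>) \<le> ln (L / cmod c) + ln (L / (cmod c * (\<Prod>i<n. cmod (r i))))"
proof -
  define w where "w i = (if cmod (r i) \<le> 1 then r i else 1 / cnj (r i))" for i
  define Mf where "Mf = (\<Prod>i<n. max 1 (cmod (r i)))"
  have Mf: "Mf \<ge> 1" unfolding Mf_def by (intro prod_ge_1) auto
  have cpos: "cmod c > 0" using c by simp
  have Qb: "cmod (\<Prod>i<n. (1 - w i * \<zeta>)) \<le> L / (cmod c * Mf)" if "cmod \<zeta> \<le> 1" for \<zeta>
    using Q_bound[OF r c L that] unfolding w_def Mf_def .
  from Qb[of 0] have "1 \<le> L / (cmod c * Mf)" by simp
  then have CM: "cmod c * Mf \<le> L" using Mf cpos by (simp add: field_simps)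
  then show "cmod c * (\<Prod>i<n. max 1 (cmod (r i))) \<le> L" unfolding Mf_def .
  have Lpos: "L > 0" using CM Mf cpos by (smt (verit) mult_pos_pos)
  have lnMf: "ln Mf = (\<Sum>i<n. ln (max 1 (cmod (r i))))"
    unfolding Mf_def by (rule ln_prod) auto
  have "ln Mf \<le> ln (L / cmod c)" using CM Mf cpos Lpos
    by (subst ln_le_cancel_iff) (auto simp: field_simps)
  then show S1: "(\<Sum>i<n. ln (max 1 (cmod (r i)))) \<le> ln (L / cmod c)" using lnMf by simp
  show "cmod (\<Sum>i<n. (if cmod (r i) \<le> 1 then r i else 1 / cnj (r i)) ^ m) \<le> 4 * real m * 2^m * ln (L / cmod c)" if m: "m \<ge> 1"
  proof -
    have E1: "L / (cmod c * Mf) \<ge> 1" using CM Mf cpos by (simp add: field_simps)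
    have wle: "cmod (w i) \<le> 1" if "i < n" for i
      using r[OF that] by (auto simp: w_def norm_divide field_simps)
    have A1: "cmod (\<Sum>i<n. w i ^ m) \<le> 4 * real m * 2^m * ln (L / (cmod c * Mf))"
      using moment_bound[OF wle m E1 Qb] by simp
    have "ln (L / (cmod c * Mf)) \<le> ln (L / cmod c)"
      using Mf cpos Lpos by (subst ln_le_cancel_iff) (auto simp: field_simps)
    then have "4 * real m * 2^m * ln (L / (cmod c * Mf)) \<le> 4 * real m * 2^m * ln (L / cmod c)"
      by (intro mult_left_mono) auto
    with A1 have "cmod (\<Sum>i<n. w i ^ m) \<le> 4 * real m * 2^m * ln (L / cmod c)" by linarith
    then show ?thesis unfolding w_def by simp
  qed
  have abs_ln: "\<bar>ln x\<bar> = 2 * ln (max 1 x) - ln x" if "x > 0" for x :: real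
    using that by (cases "x \<le> 1") (auto simp: max_def)
  have e1: "(\<Sum>i<n. \<bar>ln (cmod (r i))\<bar>) = 2 * (\<Sum>i<n. ln (max 1 (cmod (r i)))) - (\<Sum>i<n. ln (cmod (r i)))"
    using r by (simp add: abs_ln sum_subtractf sum_distrib_left)
  have e2: "(\<Sum>i<n. ln (cmod (r i))) = ln (\<Prod>i<n. cmod (r i))"
    by (rule ln_prod[symmetric]) (use r in auto)
  have pp: "(\<Prod>i<n. cmod (r i)) > 0" using r by (intro prod_pos) auto
  have e3: "ln (\<Prod>i<n. cmod (r i)) = ln (cmod c * (\<Prod>i<n. cmod (r i))) - ln (cmod c)"
    using ln_mult_pos[OF cpos pp] by linarith
  have e4: "ln (L / cmod c) + ln (L / (cmod c * (\<Prod>i<n. cmod (r i)))) = 2 * ln (L / cmod c) - (ln (cmod c * (\<Prod>i<n. cmod (r i))) - ln (cmod c))"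
    using ln_mult_pos[OF cpos pp] ln_divide_pos[OF Lpos cpos] ln_divide_pos[OF Lpos mult_pos_pos[OF cpos pp]] by linarith
  show "(\<Sum>i<n. \<bar>ln (cmod (r i))\<bar>) \<le> ln (L / cmod c) + ln (L / (cmod c * (\<Prod>i<n. cmod (r i))))"
    unfolding e4 e1 e2 e3 using S1 by linarith
qed



lemma unit_w_diff:
  fixes r :: complex assumes r: "r \<noteq> 0"
  shows "cmod ((r / of_real (cmod r))^m - (if cmod r \<le> 1 then r else 1 / cnj r)^m) \<le> m * \<bar>ln (cmod r)\<bar>"
proof -
  define x where "x = cmod r"
  have x: "x > 0" using r by (simp add: x_def)
  have n1: "cmod (r / of_real (cmod r)) \<le> 1" using r by (simp add: norm_divide)
  have n2: "cmod (if cmod r \<le> 1 then r else 1 / cnj r) \<le> 1" using r by (auto simp: norm_divide)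
  have nm: "cmod (r * of_real y) = x * \<bar>y\<bar>" for y by (simp add: norm_mult x_def)
  have d: "cmod (r / of_real (cmod r) - (if cmod r \<le> 1 then r else 1 / cnj r)) \<le> \<bar>ln (cmod r)\<bar>"
  proof (cases "cmod r \<le> 1")
    case True
    have "r / of_real (cmod r) - r = r * of_real (1 / x - 1)" using x by (simp add: x_def field_simps)
    then have "cmod (r / of_real (cmod r) - r) = x * \<bar>1 / x - 1\<bar>" by (simp only: nm)
    also have "\<dots> = 1 - x" using x True by (simp add: x_def field_simps abs_if)
    also have "\<dots> \<le> - ln x" using ln_le_minus_one[OF x] by linarith
    also have "\<dots> = \<bar>ln x\<bar>" using True x by (simp add: x_def)
    finally show ?thesis using True by (simp add: x_def)
  next
    case False
    have cr: "1 / cnj r = r / of_real (x^2)"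
      using r complex_norm_square[of r] by (simp add: x_def field_simps)
    have "r / of_real (cmod r) - 1 / cnj r = r * of_real (1 / x - 1 / x^2)" unfolding cr using x
      by (simp add: x_def field_simps)
    then have "cmod (r / of_real (cmod r) - 1 / cnj r) = x * \<bar>1 / x - 1 / x^2\<bar>" by (simp only: nm)
    also have "\<dots> = 1 - 1 / x" using x False by (simp add: x_def field_simps abs_if power2_eq_square)
    also have "\<dots> \<le> ln x"
    proof -
      have "ln (1/x) \<le> 1/x - 1" using x by (intro ln_le_minus_one) auto
      then show ?thesis using x by (simp add: ln_div)
    qed
    also have "\<dots> = \<bar>ln x\<bar>" using False x by (simp add: x_def)
    finally show ?thesis using False by (simp add: x_def)
  qed
  have "cmod ((r / of_real (cmod r))^m - (if cmod r \<le> 1 then r else 1 / cnj r)^m) \<le> m * cmod (r / of_real (cmod r) - (if cmod r \<le> 1 then r else 1 / cnj r))"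
    by (rule norm_power_diff[OF n1 n2])
  also have "\<dots> \<le> m * \<bar>ln (cmod r)\<bar>" using d by (intro mult_left_mono) auto
  finally show ?thesis .
qed

inductive tp :: "(complex \<Rightarrow> real) \<Rightarrow> bool" where
  tp_basic: "tp (\<lambda>u. Re (c * u^j * cnj u ^ k))"
| tp_add: "tp f \<Longrightarrow> tp g \<Longrightarrow> tp (\<lambda>u. f u + g u)"

lemma Re_mult_Re: "Re x * Re y = Re (x * y / 2) + Re (x * cnj y / 2)"
  by (simp add: field_simps)

lemma tp_mult_basic: "tp g \<Longrightarrow> tp (\<lambda>u. Re (c * u^j * cnj u ^ k) * g u)"
proof (induction rule: tp.induct)
  case (tp_basic d j' k')
  have e: "Re (c * u^j * cnj u ^ k) * Re (d * u^j' * cnj u ^ k') =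
     Re ((c * d / 2) * u^(j+j') * cnj u ^ (k+k')) + Re ((c * cnj d / 2) * u^(j+k') * cnj u ^ (k+j'))" for u
    unfolding Re_mult_Re by (simp add: power_add algebra_simps)
  show ?case unfolding e by (intro tp.intros)
next
  case (tp_add f g)
  then show ?case by (simp add: distrib_left tp.tp_add)
qed

lemma tp_mult: "tp f \<Longrightarrow> tp g \<Longrightarrow> tp (\<lambda>u. f u * g u)"
proof (induction rule: tp.induct)
  case (tp_basic c j k) then show ?case by (rule tp_mult_basic)
next
  case (tp_add f1 f2) then show ?case by (simp add: distrib_right tp.tp_add)
qed

lemma tp_const: "tp (\<lambda>u. a)"
  using tp_basic[of "of_real a" 0 0] by simp

lemma tp_linear:
  assumes "bounded_linear f" shows "tp f"
proof -
  interpret bounded_linear f by fact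
  have e: "f u = Re (of_real (f 1) * u^1 * cnj u^0) + Re ((- \<i> * of_real (f \<i>)) * u^1 * cnj u^0)" for u
  proof -
    have "u = Re u *\<^sub>R 1 + Im u *\<^sub>R \<i>" by (simp add: complex_eq_iff)
    moreover have "f (Re u *\<^sub>R 1 + Im u *\<^sub>R \<i>) = Re u * f 1 + Im u * f \<i>" by (simp add: add scale)
    ultimately have "f u = Re u * f 1 + Im u * f \<i>" by simp
    then show ?thesis by simp
  qed
  show ?thesis by (subst e[abs_def]) (intro tp.intros)
qed

lemma poly_tp: "real_polynomial_function g \<Longrightarrow> tp g"
  by (induction rule: real_polynomial_function.induct) (auto intro: tp_linear tp_const tp_mult tp.tp_add)

lemma tp_cont: "tp g \<Longrightarrow> continuous_on UNIV g"
  by (induction rule: tp.induct) (auto intro!: continuous_intros)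

definition Ic :: "(complex \<Rightarrow> real) \<Rightarrow> real" where
  "Ic g = integral {0..2*pi} (\<lambda>t. g (cis t)) / (2*pi)"

lemma basic_unit:
  fixes u c :: complex assumes u: "cmod u = 1"
  shows "Re (c * u^j * cnj u ^ k) = (if k \<le> j then Re (c * u^(j-k)) else Re (cnj c * u^(k-j)))"
proof -
  have uu: "u * cnj u = 1" using complex_norm_square[of u] u by simp
  show ?thesis
  proof (cases "k \<le> j")
    case True
    have "u^j * cnj u ^ k = u^(j-k) * (u * cnj u)^k"
      using True by (simp add: power_mult_distrib power_add[symmetric])
    then show ?thesis using True uu by (simp add: mult.assoc)
  next
    case False
    have "u^j * cnj u ^ k = cnj u ^ (k-j) * (u * cnj u)^j"
      using False by (simp add: power_mult_distrib power_add[symmetric] mult_ac)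
    then have A: "c * u^j * cnj u ^ k = c * cnj u ^ (k-j)" using uu by (simp add: mult.assoc)
    have B: "Re (c * cnj u ^ (k-j)) = Re (cnj c * u^(k-j))"
      by (metis complex_cnj_cnj complex_cnj_mult complex_cnj_power cnj.simps(1))
    show ?thesis by (simp only: if_not_P[OF False] A B)
  qed
qed

lemma tp_cis_integrable: "tp g \<Longrightarrow> (\<lambda>t. g (cis t)) integrable_on {0..2*pi}"
  by (intro integrable_continuous_interval continuous_on_compose2[OF tp_cont[of g]] continuous_intros) auto

lemma tp_limit:
  fixes U :: "nat \<Rightarrow> nat \<Rightarrow> complex"
  assumes U: "\<And>n i. cmod (U n i) = 1"
    and mom: "\<And>m. m \<ge> 1 \<Longrightarrow> (\<lambda>n. (\<Sum>i<n. U n i ^ m) / of_nat n) \<longlonglongrightarrow> 0"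
    and g: "tp g"
  shows "(\<lambda>n. (\<Sum>i<n. g (U n i)) / n) \<longlonglongrightarrow> Ic g"
  using g
proof (induction rule: tp.induct)
  case (tp_basic c j k)
  define e where "e = (if k \<le> j then j - k else k - j)"
  define d where "d = (if k \<le> j then c else cnj c)"
  have gu: "Re (c * u^j * cnj u ^ k) = Re (d * u^e)" if "cmod u = 1" for u
    using basic_unit[OF that, of c j k] by (simp add: d_def e_def)
  have sumeq: "(\<Sum>i<n. Re (c * U n i ^ j * cnj (U n i) ^ k)) / n = Re (d * ((\<Sum>i<n. U n i ^ e) / of_nat n))" for n
  proof -
    have "(\<Sum>i<n. Re (c * U n i ^ j * cnj (U n i) ^ k)) = (\<Sum>i<n. Re (d * U n i ^ e))"
      using gu U by simp
    also have "\<dots> = Re (d * (\<Sum>i<n. U n i ^ e))" by (simp add: sum_distrib_left)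
    finally show ?thesis by (simp add: Re_divide_of_nat)
  qed
  have cis1: "cmod (cis t) = 1" for t by simp
  have Iceq: "Ic (\<lambda>u. Re (c * u^j * cnj u ^ k)) = integral {0..2*pi} (\<lambda>t. Re (d * cis (real e * t))) / (2*pi)"
    unfolding Ic_def using gu[OF cis1] by (simp add: Complex.DeMoivre)
  show ?case
  proof (cases "e = 0")
    case True
    have "eventually (\<lambda>n. (\<Sum>i<n. Re (c * U n i ^ j * cnj (U n i) ^ k)) / n = Re d) sequentially"
      using eventually_gt_at_top[of 0] by eventually_elim (subst sumeq, simp add: True)
    then have "(\<lambda>n. (\<Sum>i<n. Re (c * U n i ^ j * cnj (U n i) ^ k)) / n) \<longlonglongrightarrow> Re d"
      by (rule tendsto_eventually)
    moreover have "Ic (\<lambda>u. Re (c * u^j * cnj u ^ k)) = Re d" unfolding Iceq True by simp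
    ultimately show ?thesis by simp
  next
    case False
    have "(\<lambda>n. Re (d * ((\<Sum>i<n. U n i ^ e) / of_nat n))) \<longlonglongrightarrow> Re (d * 0)"
      using mom[of e] False by (intro tendsto_intros) auto
    then have "(\<lambda>n. (\<Sum>i<n. Re (c * U n i ^ j * cnj (U n i) ^ k)) / n) \<longlonglongrightarrow> 0"
      unfolding sumeq by simp
    moreover have "((\<lambda>t. Re (d * cis (real e * t))) has_integral 0) {0..2*pi}"
    proof -
      have "((\<lambda>t. d * cis (real e * t)) has_integral d * 0) {0..2*pi}"
        by (intro has_integral_mult_right int_cis_zero) (use False in auto)
      from has_integral_linear[OF this bounded_linear_Re] show ?thesis by (simp add: o_def)
    qed
    then have "Ic (\<lambda>u. Re (c * u^j * cnj u ^ k)) = 0" unfolding Iceq by (simp add: integral_unique)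
    ultimately show ?thesis by simp
  qed
next
  case (tp_add f g)
  have "(\<lambda>n. (\<Sum>i<n. f (U n i)) / n + (\<Sum>i<n. g (U n i)) / n) \<longlonglongrightarrow> Ic f + Ic g"
    by (intro tendsto_add tp_add.IH)
  moreover have "Ic (\<lambda>u. f u + g u) = Ic f + Ic g"
    unfolding Ic_def using tp_cis_integrable[OF tp_add.hyps(1)] tp_cis_integrable[OF tp_add.hyps(2)]
    by (simp add: integral_add add_divide_distrib)
  ultimately show ?case by (simp add: sum.distrib add_divide_distrib)
qed

lemma avg_bound:
  fixes a b l :: "nat \<Rightarrow> real"
  assumes ab: "\<And>i. i < n \<Longrightarrow> \<bar>a i - b i\<bar> \<le> \<eta> + C * l i" and eta: "\<eta> \<ge> 0"
  shows "\<bar>(\<Sum>i<n. a i) / n - (\<Sum>i<n. b i) / n\<bar> \<le> \<eta> + C * ((\<Sum>i<n. l i) / n)"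
proof (cases "n = 0")
  case True then show ?thesis using eta by simp
next
  case False
  have "\<bar>(\<Sum>i<n. a i) - (\<Sum>i<n. b i)\<bar> = \<bar>\<Sum>i<n. (a i - b i)\<bar>" by (simp add: sum_subtractf)
  also have "\<dots> \<le> (\<Sum>i<n. \<bar>a i - b i\<bar>)" by (rule sum_abs)
  also have "\<dots> \<le> (\<Sum>i<n. \<eta> + C * l i)" by (intro sum_mono ab) auto
  also have "\<dots> = n * \<eta> + C * (\<Sum>i<n. l i)" by (simp add: sum.distrib sum_distrib_left)
  finally have "\<bar>(\<Sum>i<n. a i) - (\<Sum>i<n. b i)\<bar> / n \<le> (n * \<eta> + C * (\<Sum>i<n. l i)) / n"
    by (intro divide_right_mono) auto
  then show ?thesis using False by (simp add: diff_divide_distrib[symmetric] add_divide_distrib)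
qed

lemma ln_far:
  fixes x \<delta> :: real assumes x: "x > 0" and d: "0 < \<delta>" "\<delta> < 1" and far: "\<bar>x - 1\<bar> \<ge> \<delta>"
  shows "\<bar>ln x\<bar> \<ge> ln (1 + \<delta>)"
proof (cases "x \<ge> 1")
  case True
  then have "x \<ge> 1 + \<delta>" using far by simp
  then have "ln x \<ge> ln (1 + \<delta>)" using d by simp
  then show ?thesis by simp
next
  case False
  then have "x \<le> 1 - \<delta>" using far by simp
  then have "ln x \<le> ln (1 - \<delta>)" using x by simp
  also have "\<dots> \<le> - \<delta>" using ln_le_minus_one[of "1 - \<delta>"] d by simp
  finally have "- ln x \<ge> \<delta>" by simp
  moreover have "ln (1 + \<delta>) \<le> \<delta>" using ln_le_minus_one[of "1 + \<delta>"] d by simp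
  ultimately show ?thesis by simp
qed

theorem equi_det:
  fixes rt :: "nat \<Rightarrow> nat \<Rightarrow> complex" and f :: "complex \<Rightarrow> real"
  assumes nz: "eventually (\<lambda>n. \<forall>i<n. rt n i \<noteq> 0) sequentially"
    and lam: "(\<lambda>n. (\<Sum>i<n. \<bar>ln (cmod (rt n i))\<bar>) / n) \<longlonglongrightarrow> 0"
    and momw: "\<And>m. m \<ge> 1 \<Longrightarrow> (\<lambda>n. cmod (\<Sum>i<n. (if cmod (rt n i) \<le> 1 then rt n i else 1 / cnj (rt n i)) ^ m) / n) \<longlonglongrightarrow> 0"
    and fc: "continuous_on UNIV f" and fb: "bounded (range f)"
  shows "(\<lambda>n. (\<Sum>i<n. f (rt n i)) / n) \<longlonglongrightarrow> Ic f"
proof -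
  define U where "U n i = (if rt n i = 0 then 1 else rt n i / of_real (cmod (rt n i)))" for n i
  define lam where "lam n = (\<Sum>i<n. \<bar>ln (cmod (rt n i))\<bar>) / n" for n
  have U1: "cmod (U n i) = 1" for n i by (simp add: U_def norm_divide)
  have momU: "(\<lambda>n. (\<Sum>i<n. U n i ^ m) / of_nat n) \<longlonglongrightarrow> 0" if m: "m \<ge> 1" for m
  proof (rule Lim_null_comparison)
    show "eventually (\<lambda>n. norm ((\<Sum>i<n. U n i ^ m) / of_nat n) \<le>
        cmod (\<Sum>i<n. (if cmod (rt n i) \<le> 1 then rt n i else 1 / cnj (rt n i)) ^ m) / n + m * lam n) sequentially"
      using nz
    proof eventually_elim
      case (elim n)
      define w where "w i = (if cmod (rt n i) \<le> 1 then rt n i else 1 / cnj (rt n i))" for i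
      have eqs: "(\<Sum>i<n. U n i ^ m) = (\<Sum>i<n. w i ^ m) + (\<Sum>i<n. (U n i ^ m - w i ^ m))"
        by (simp add: sum_subtractf)
      have "cmod (\<Sum>i<n. U n i ^ m) \<le> cmod (\<Sum>i<n. w i ^ m) + cmod (\<Sum>i<n. (U n i ^ m - w i ^ m))"
        unfolding eqs by (rule norm_triangle_ineq)
      also have "cmod (\<Sum>i<n. (U n i ^ m - w i ^ m)) \<le> (\<Sum>i<n. cmod (U n i ^ m - w i ^ m))"
        by (rule norm_sum)
      also have "\<dots> \<le> (\<Sum>i<n. m * \<bar>ln (cmod (rt n i))\<bar>)"
        using elim unit_w_diff by (intro sum_mono) (auto simp: U_def w_def)
      finally have "cmod (\<Sum>i<n. U n i ^ m) \<le> cmod (\<Sum>i<n. w i ^ m) + m * (\<Sum>i<n. \<bar>ln (cmod (rt n i))\<bar>)"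
        by (simp add: sum_distrib_left)
      then have "cmod (\<Sum>i<n. U n i ^ m) / n \<le> (cmod (\<Sum>i<n. w i ^ m) + m * (\<Sum>i<n. \<bar>ln (cmod (rt n i))\<bar>)) / n"
        by (intro divide_right_mono) auto
      then show ?case by (simp add: norm_divide lam_def w_def add_divide_distrib)
    qed
    show "(\<lambda>n. cmod (\<Sum>i<n. (if cmod (rt n i) \<le> 1 then rt n i else 1 / cnj (rt n i)) ^ m) / n + m * lam n) \<longlonglongrightarrow> 0"
      using momw[OF m] lam unfolding lam_def[abs_def] by (intro tendsto_add_zero tendsto_mult_right_zero) auto
  qed
  have tpl: "tp g \<Longrightarrow> (\<lambda>n. (\<Sum>i<n. g (U n i)) / n) \<longlonglongrightarrow> Ic g" for g
    by (rule tp_limit[OF U1 momU])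
  obtain B where B: "\<And>x. \<bar>f x\<bar> \<le> B" using fb unfolding bounded_iff by auto
  have B0: "B \<ge> 0" using B[of 0] by simp
  show ?thesis unfolding tendsto_iff
  proof (intro allI impI)
    fix e :: real assume e: "e > 0"
    define \<eta> where "\<eta> = e / 5"
    have eta: "\<eta> > 0" using e by (simp add: \<eta>_def)
    have "\<exists>g. polynomial_function g \<and> (\<forall>x\<in>sphere (0::complex) 1. norm (f x - g x) < \<eta>)"
      by (rule Stone_Weierstrass_polynomial_function[OF compact_sphere continuous_on_subset[OF fc subset_UNIV] eta])
    then obtain g where gp: "polynomial_function g" and gf: "\<And>x. x \<in> sphere 0 1 \<Longrightarrow> norm (f x - g x) < \<eta>"
      by blast
    have tpg: "tp g" using gp by (simp add: real_polynomial_function_eq[symmetric] poly_tp)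
    have "uniformly_continuous_on (cball (0::complex) 2) f"
      by (rule compact_uniformly_continuous[OF continuous_on_subset[OF fc]]) auto
    then obtain d' where d': "d' > 0" and uc: "\<And>x x'. x \<in> cball 0 2 \<Longrightarrow> x' \<in> cball 0 2 \<Longrightarrow> dist x' x < d' \<Longrightarrow> dist (f x') (f x) < \<eta>"
      unfolding uniformly_continuous_on_def using eta by metis
    define \<delta> where "\<delta> = min d' (1/2)"
    have dl: "0 < \<delta>" "\<delta> < 1" "\<delta> \<le> d'" using d' by (auto simp: \<delta>_def)
    define \<kappa> where "\<kappa> = ln (1 + \<delta>)"
    have ka: "\<kappa> > 0" using dl by (simp add: \<kappa>_def)
    have pt: "\<bar>f r - f (r / of_real (cmod r))\<bar> \<le> \<eta> + (2 * B / \<kappa>) * \<bar>ln (cmod r)\<bar>" if r: "r \<noteq> 0" for r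
    proof (cases "\<bar>cmod r - 1\<bar> < \<delta>")
      case True
      have dist: "dist (r / of_real (cmod r)) r = \<bar>cmod r - 1\<bar>"
      proof -
        have "r / of_real (cmod r) - r = r * of_real (1 / cmod r - 1)" using r by (simp add: field_simps)
        then have "dist (r / of_real (cmod r)) r = cmod r * \<bar>1 / cmod r - 1\<bar>"
          by (simp only: dist_norm norm_mult norm_of_real)
        also have "\<dots> = \<bar>cmod r - 1\<bar>" using r by (simp add: abs_mult[symmetric] field_simps)
        finally show ?thesis .
      qed
      have "r \<in> cball 0 2" using True dl by auto
      moreover have "r / of_real (cmod r) \<in> cball 0 2" using r by (simp add: norm_divide)
      ultimately have "dist (f (r / of_real (cmod r))) (f r) < \<eta>"
        using uc dist True dl by auto
      moreover have "(2 * B / \<kappa>) * \<bar>ln (cmod r)\<bar> \<ge> 0" using B0 ka by auto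
      ultimately show ?thesis by (simp add: dist_real_def abs_minus_commute)
    next
      case False
      have "\<bar>ln (cmod r)\<bar> \<ge> \<kappa>" unfolding \<kappa>_def using False dl r by (intro ln_far) auto
      then have "(2 * B / \<kappa>) * \<bar>ln (cmod r)\<bar> \<ge> (2 * B / \<kappa>) * \<kappa>" using B0 ka by (intro mult_left_mono) auto
      then have "(2 * B / \<kappa>) * \<bar>ln (cmod r)\<bar> \<ge> 2 * B" using ka by simp
      moreover have "\<bar>f r - f (r / of_real (cmod r))\<bar> \<le> 2 * B" using B[of r] B[of "r / of_real (cmod r)"] by linarith
      ultimately show ?thesis using eta by linarith
    qed
    have ev1: "eventually (\<lambda>n. (2 * B / \<kappa>) * lam n < \<eta>) sequentially"
    proof -
      have "(\<lambda>n. (2 * B / \<kappa>) * lam n) \<longlonglongrightarrow> 0" using lam unfolding lam_def[abs_def]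
        by (intro tendsto_mult_right_zero)
      then show ?thesis using eta by (rule order_tendstoD)
    qed
    have ev2: "eventually (\<lambda>n. \<bar>(\<Sum>i<n. g (U n i)) / n - Ic g\<bar> < \<eta>) sequentially"
      using tpl[OF tpg] eta unfolding tendsto_iff dist_real_def by auto
    have Icfg: "\<bar>Ic g - Ic f\<bar> \<le> \<eta>"
    proof -
      have intf: "(\<lambda>t. f (cis t)) integrable_on {0..2*pi}"
        by (intro integrable_continuous_interval continuous_on_compose2[OF fc] continuous_intros) auto
      have intg: "(\<lambda>t. g (cis t)) integrable_on {0..2*pi}" by (rule tp_cis_integrable[OF tpg])
      have "norm (integral {0..2*pi} (\<lambda>t. g (cis t) - f (cis t))) \<le> integral {0..2*pi} (\<lambda>t. \<eta>)"
      proof (rule integral_norm_bound_integral)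
        show "(\<lambda>t. g (cis t) - f (cis t)) integrable_on {0..2*pi}" by (rule integrable_diff[OF intg intf])
        show "(\<lambda>t. \<eta>) integrable_on {0..2*pi}" by (rule integrable_const_ivl)
        fix t
        have "\<bar>f (cis t) - g (cis t)\<bar> < \<eta>" using gf[of "cis t"] by simp
        then show "norm (g (cis t) - f (cis t)) \<le> \<eta>" by simp
      qed
      then have "\<bar>integral {0..2*pi} (\<lambda>t. g (cis t)) - integral {0..2*pi} (\<lambda>t. f (cis t))\<bar> \<le> 2 * pi * \<eta>"
        using intf intg by (simp add: integral_diff)
      then show ?thesis unfolding Ic_def by (simp add: diff_divide_distrib[symmetric] field_simps)
    qed
    show "eventually (\<lambda>n. dist ((\<Sum>i<n. f (rt n i)) / n) (Ic f) < e) sequentially"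
      using nz ev1 ev2
    proof eventually_elim
      case (elim n)
      have X: "\<bar>(\<Sum>i<n. f (rt n i)) / n - (\<Sum>i<n. f (U n i)) / n\<bar> \<le> \<eta> + (2 * B / \<kappa>) * lam n"
        unfolding lam_def by (rule avg_bound) (use elim(1) pt eta in \<open>auto simp: U_def\<close>)
      have Y0: "\<bar>(\<Sum>i<n. f (U n i)) / n - (\<Sum>i<n. g (U n i)) / n\<bar> \<le> \<eta> + 0 * ((\<Sum>i<n. (0::real)) / n)"
      proof (rule avg_bound)
        fix i show "\<bar>f (U n i) - g (U n i)\<bar> \<le> \<eta> + 0 * 0" using gf[of "U n i"] U1[of n i] by simp
      qed (use eta in auto)
      then have Y: "\<bar>(\<Sum>i<n. f (U n i)) / n - (\<Sum>i<n. g (U n i)) / n\<bar> \<le> \<eta>" by simp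
      show ?case unfolding dist_real_def using X Y elim(2) elim(3) Icfg \<eta>_def by linarith
    qed
  qed
qed



lemma rand_poly_poly: "poly (rand_poly A n \<omega>) z = (\<Sum>k\<le>n. A k \<omega> * z^k)"
  by (simp add: rand_poly_def poly_sum poly_monom)

lemma rand_poly_coeff: "coeff (rand_poly A n \<omega>) k = (if k \<le> n then A k \<omega> else 0)"
  by (simp add: rand_poly_def coeff_sum coeff_monom)

lemma rand_poly_degree: "A n \<omega> \<noteq> 0 \<Longrightarrow> degree (rand_poly A n \<omega>) = n"
  by (rule antisym) (auto intro!: degree_le le_degree simp: rand_poly_coeff)

lemma rand_poly_lead: "A n \<omega> \<noteq> 0 \<Longrightarrow> lead_coeff (rand_poly A n \<omega>) = A n \<omega>"
  by (simp add: rand_poly_degree rand_poly_coeff)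

lemma rand_poly_0: "poly (rand_poly A n \<omega>) 0 = A 0 \<omega>"
  by (simp add: rand_poly_poly zero_power)

lemma rand_poly_circle: "cmod z = 1 \<Longrightarrow> cmod (poly (rand_poly A n \<omega>) z) \<le> (\<Sum>k\<le>n. cmod (A k \<omega>))"
  unfolding rand_poly_poly
  by (rule order_trans[OF norm_sum]) (simp add: norm_mult norm_power)

lemma proots_decomp:
  assumes "c \<noteq> 0"
  shows "proots (smult c (\<Prod>i<n. [:-r i, 1:])) = (\<Sum>i<n. {#r i#})"
proof -
  have "proots (\<Prod>i<n. [:-r i, 1:]) = (\<Sum>i<n. proots [:-r i, 1:])"
    by (rule proots_prod) auto
  then show ?thesis using assms by simp
qed

lemma sum_mset_decomp: "sum_mset (image_mset f (\<Sum>i<(n::nat). {#r i#})) = (\<Sum>i<n. f (r i))"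
  by (induction n) (auto simp: add.commute)

lemma size_decomp: "size (\<Sum>i<(n::nat). {#r i#}) = n"
  by (induction n) auto

lemma sum_count_mset:
  fixes f :: "'a \<Rightarrow> real"
  assumes "finite A" "set_mset R \<subseteq> A"
  shows "(\<Sum>a\<in>A. f a * real (count R a)) = sum_mset (image_mset f R)"
  using assms(2)
proof (induction R)
  case empty then show ?case by simp
next
  case (add x R)
  have "(\<Sum>a\<in>A. f a * real (count (add_mset x R) a)) = (\<Sum>a\<in>A. f a * real (count R a)) + (\<Sum>a\<in>A. if a = x then f a else 0)"
    by (simp add: sum.distrib[symmetric]) (intro sum.cong, auto simp: algebra_simps)
  also have "(\<Sum>a\<in>A. if a = x then f a else 0) = f x" using add.prems assms(1) by (simp add: sum.delta)
  finally show ?case using add by simp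
qed

lemma zcm_integral:
  fixes p :: "complex poly" and f :: "complex \<Rightarrow> real"
  assumes p: "p \<noteq> 0" and n: "size (proots p) = n" "n > 0" and f: "f \<in> borel_measurable borel"
  shows "integral\<^sup>L (zero_counting_measure n p) f = sum_mset (image_mset f (proots p)) / n"
proof -
  define R where "R = proots p"
  have R: "R \<noteq> {#}" using n by (auto simp: R_def)
  define P where "P = pmf_of_multiset R"
  define N where "N = distr (measure_pmf P) borel (\<lambda>x. x)"
  have pmfP: "pmf P x = real (count R x) / n" for x using R n by (simp add: P_def R_def)
  have setP: "set_pmf P = set_mset R" using R by (simp add: P_def)
  have fin: "finite (set_mset R)" by simp
  have "zero_counting_measure n p = N"
  proof -
    have N: "N = measure_of UNIV (sets borel) (emeasure N)"
      using measure_of_of_measure[of N] by (simp add: N_def)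
    show ?thesis unfolding zero_counting_measure_def
    proof (subst N, rule measure_of_eq)
      show "sets borel \<subseteq> Pow UNIV" by simp
      fix a assume "a \<in> sigma_sets UNIV (sets (borel :: complex measure))"
      then have a: "a \<in> sets borel" using sets.sigma_sets_eq[of "borel :: complex measure"] by simp
      have "emeasure N a = emeasure (measure_pmf P) a"
        unfolding N_def by (subst emeasure_distr) (use a in auto)
      also have "\<dots> = emeasure (measure_pmf P) (a \<inter> set_mset R)"
        using emeasure_Int_set_pmf[of P a] setP by simp
      also have "\<dots> = (\<Sum>s\<in>a \<inter> set_mset R. ennreal (pmf P s))"
        using emeasure_measure_pmf_finite[of "a \<inter> set_mset R" P] by simp
      also have "\<dots> = ennreal (\<Sum>s\<in>a \<inter> set_mset R. pmf P s)"
        by (rule sum_ennreal) simp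
      also have "(\<Sum>s\<in>a \<inter> set_mset R. pmf P s) = (\<Sum>z\<in>{z. poly p z = 0} \<inter> a. real (order z p)) / real n"
        using p by (simp add: pmfP R_def sum_divide_distrib Int_commute)
      finally show "ennreal ((\<Sum>z\<in>{z. poly p z = 0} \<inter> a. real (order z p)) / real n) = emeasure N a" by simp
    qed
  qed
  then have "integral\<^sup>L (zero_counting_measure n p) f = integral\<^sup>L (measure_pmf P) f"
    unfolding N_def by (simp add: integral_distr f)
  also have "\<dots> = (\<Sum>a\<in>set_mset R. f a * pmf P a)"
    by (rule integral_measure_pmf_real) (use setP in auto)
  also have "\<dots> = (\<Sum>a\<in>set_mset R. f a * real (count R a)) / n"
    by (simp add: pmfP sum_divide_distrib)
  also have "\<dots> = sum_mset (image_mset f R) / n"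
    by (subst sum_count_mset) auto
  finally show ?thesis by (simp add: R_def)
qed

lemma circle_integral:
  fixes f :: "complex \<Rightarrow> real"
  assumes f: "continuous_on UNIV f"
  shows "integral\<^sup>L unit_circle_measure f = Ic f"
proof -
  have fm: "f \<in> borel_measurable borel" using f by (simp add: borel_measurable_continuous_onI)
  have c: "continuous_on {0..2*pi} (\<lambda>t. f (cis t))"
    by (intro continuous_on_compose2[OF f] continuous_intros) auto
  have h2: "2 * ennreal pi = ennreal (2*pi)" by (simp add: ennreal_mult)
  have h: "1 / ennreal (2 * pi) = ennreal (1/(2*pi))"
    using divide_ennreal[of 1 "2*pi"] by simp
  have "integral\<^sup>L unit_circle_measure f = integral\<^sup>L (uniform_measure lborel {0..2*pi}) (\<lambda>t. f (cis t))"
  proof -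
    have "continuous_on UNIV cis" by (rule continuous_on_cis[OF continuous_on_id])
    then have "cis \<in> borel_measurable (borel :: real measure)" by (rule borel_measurable_continuous_onI)
    then have "cis \<in> borel_measurable (lborel :: real measure)" by simp
    then have cm: "cis \<in> borel_measurable (uniform_measure lborel {0..2*pi})"
      using measurable_cong_sets[of "uniform_measure lborel {0..2*pi}" lborel borel borel] by simp
    show ?thesis unfolding unit_circle_measure_def by (subst integral_distr[OF cm fm]) simp
  qed
  also have "uniform_measure lborel {0..2*pi} = density lborel (\<lambda>x. ennreal (indicator {0..2*pi} x / (2*pi)))"
    unfolding uniform_measure_def
    by (intro density_cong) (auto simp: indicator_def h)
  also have "integral\<^sup>L (density lborel (\<lambda>x. ennreal (indicator {0..2*pi} x / (2*pi)))) (\<lambda>t. f (cis t))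
      = integral\<^sup>L lborel (\<lambda>x. (indicator {0..2*pi} x / (2*pi)) *\<^sub>R f (cis x))"
  proof (rule integral_density)
    have "continuous_on UNIV (\<lambda>t. f (cis t))" by (intro continuous_on_compose2[OF f] continuous_intros) auto
    then show "(\<lambda>t. f (cis t)) \<in> borel_measurable lborel" using borel_measurable_continuous_onI by simp
  qed auto
  also have "\<dots> = (LINT x : {0..2*pi} | lborel. f (cis x)) / (2*pi)"
    by (simp add: set_lebesgue_integral_def)
  also have "(LINT x : {0..2*pi} | lborel. f (cis x)) = integral {0..2*pi} (\<lambda>t. f (cis t))"
    by (rule set_borel_integral_eq_integral(2)[OF borel_integrable_atLeastAtMost'[OF c]])
  finally show ?thesis unfolding Ic_def .
qed

lemma good_poly:
  fixes A :: "nat \<Rightarrow> 'a \<Rightarrow> complex"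
  assumes an: "A n \<omega> \<noteq> 0"
  shows "\<exists>r. smult (A n \<omega>) (\<Prod>i<n. [:-r i, 1:]) = rand_poly A n \<omega>"
proof -
  have p0: "rand_poly A n \<omega> \<noteq> 0"
  proof
    assume "rand_poly A n \<omega> = 0"
    then have "coeff (rand_poly A n \<omega>) n = 0" by simp
    then show False using an by (simp add: rand_poly_coeff)
  qed
  obtain root where "smult (lead_coeff (rand_poly A n \<omega>)) (\<Prod>i<degree (rand_poly A n \<omega>). [:-root i, 1:]) = rand_poly A n \<omega>"
    by (rule complex_poly_decompose')
  then have "smult (A n \<omega>) (\<Prod>i<n. [:-root i, 1:]) = rand_poly A n \<omega>"
    using an by (simp add: rand_poly_degree rand_poly_lead rand_poly_coeff)
  then show ?thesis by blast
qed

theorem det_main: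
  fixes A :: "nat \<Rightarrow> 'a \<Rightarrow> complex" and \<omega> :: 'a
  assumes a0: "A 0 \<omega> \<noteq> 0"
    and an: "eventually (\<lambda>n. A n \<omega> \<noteq> 0) sequentially"
    and e1: "(\<lambda>n. ln ((\<Sum>k\<le>n. cmod (A k \<omega>)) / cmod (A n \<omega>)) / n) \<longlonglongrightarrow> 0"
    and e2: "(\<lambda>n. ln ((\<Sum>k\<le>n. cmod (A k \<omega>)) / cmod (A 0 \<omega>)) / n) \<longlonglongrightarrow> 0"
  shows "weak_conv_c (\<lambda>n. zero_counting_measure n (rand_poly A n \<omega>)) unit_circle_measure"
proof -
  define p where "p n = rand_poly A n \<omega>" for n
  define L where "L n = (\<Sum>k\<le>n. cmod (A k \<omega>))" for n
  have "\<forall>n. \<exists>r. A n \<omega> \<noteq> 0 \<longrightarrow> smult (A n \<omega>) (\<Prod>i<n. [:-r i, 1:]) = p n"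
    using good_poly unfolding p_def by metis
  then obtain rt where rt: "\<And>n. A n \<omega> \<noteq> 0 \<Longrightarrow> smult (A n \<omega>) (\<Prod>i<n. [:-rt n i, 1:]) = p n"
    by metis
  have polyp: "poly (p n) z = A n \<omega> * (\<Prod>i<n. (z - rt n i))" if "A n \<omega> \<noteq> 0" for n z
    using arg_cong[OF rt[OF that], of "\<lambda>q. poly q z"] by (simp add: poly_prod)
  have rtnz: "rt n i \<noteq> 0" if "A n \<omega> \<noteq> 0" "i < n" for n i
  proof
    assume "rt n i = 0"
    then have "(\<Prod>i<n. (0 - rt n i)) = 0" using that(2) by (intro prod_zero) auto
    then have "poly (p n) 0 = 0" using polyp[OF that(1)] by simp
    then show False using a0 by (simp add: p_def rand_poly_0)
  qed
  have circ: "cmod (A n \<omega> * (\<Prod>i<n. (\<zeta> - rt n i))) \<le> L n" if "A n \<omega> \<noteq> 0" "cmod \<zeta> = 1" for n \<zeta>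
    using rand_poly_circle[OF that(2), of A n \<omega>] polyp[OF that(1)] by (simp add: p_def L_def)
  have prod0: "cmod (A n \<omega>) * (\<Prod>i<n. cmod (rt n i)) = cmod (A 0 \<omega>)" if "A n \<omega> \<noteq> 0" for n
  proof -
    have "cmod (A 0 \<omega>) = cmod (poly (p n) 0)" by (simp add: p_def rand_poly_0)
    also have "\<dots> = cmod (A n \<omega>) * (\<Prod>i<n. cmod (rt n i))"
      using polyp[OF that] by (simp add: norm_mult prod_norm[symmetric])
    finally show ?thesis by simp
  qed
  have proots_p: "proots (p n) = (\<Sum>i<n. {#rt n i#})" if "A n \<omega> \<noteq> 0" for n
    using rt[OF that] proots_decomp[OF that] by metis
  have lam: "(\<lambda>n. (\<Sum>i<n. \<bar>ln (cmod (rt n i))\<bar>) / n) \<longlonglongrightarrow> 0"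
  proof (rule tendsto_sandwich[where f = "\<lambda>n. 0" and h = "\<lambda>n. ln (L n / cmod (A n \<omega>)) / n + ln (L n / cmod (A 0 \<omega>)) / n"])
    show "eventually (\<lambda>n. 0 \<le> (\<Sum>i<n. \<bar>ln (cmod (rt n i))\<bar>) / n) sequentially"
      by (intro always_eventually allI divide_nonneg_nonneg sum_nonneg) auto
    show "eventually (\<lambda>n. (\<Sum>i<n. \<bar>ln (cmod (rt n i))\<bar>) / n \<le> ln (L n / cmod (A n \<omega>)) / n + ln (L n / cmod (A 0 \<omega>)) / n) sequentially"
      using an
    proof eventually_elim
      case (elim n)
      have "(\<Sum>i<n. \<bar>ln (cmod (rt n i))\<bar>) \<le> ln (L n / cmod (A n \<omega>)) + ln (L n / (cmod (A n \<omega>) * (\<Prod>i<n. cmod (rt n i))))"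
        by (rule poly_core(4)) (use rtnz[OF elim] elim circ[OF elim] in auto)
      then show ?case unfolding prod0[OF elim] add_divide_distrib[symmetric]
        by (intro divide_right_mono) auto
    qed
    show "(\<lambda>n. 0) \<longlonglongrightarrow> (0::real)" by simp
    show "(\<lambda>n. ln (L n / cmod (A n \<omega>)) / n + ln (L n / cmod (A 0 \<omega>)) / n) \<longlonglongrightarrow> 0"
      using tendsto_add[OF e1 e2] by (simp add: L_def)
  qed
  have momw: "(\<lambda>n. cmod (\<Sum>i<n. (if cmod (rt n i) \<le> 1 then rt n i else 1 / cnj (rt n i)) ^ m) / n) \<longlonglongrightarrow> 0"
    if m: "m \<ge> 1" for m
  proof (rule tendsto_sandwich[where f = "\<lambda>n. 0" and h = "\<lambda>n. (4 * real m * 2^m) * (ln (L n / cmod (A n \<omega>)) / n)"])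
    show "eventually (\<lambda>n. 0 \<le> cmod (\<Sum>i<n. (if cmod (rt n i) \<le> 1 then rt n i else 1 / cnj (rt n i)) ^ m) / n) sequentially"
      by simp
    show "eventually (\<lambda>n. cmod (\<Sum>i<n. (if cmod (rt n i) \<le> 1 then rt n i else 1 / cnj (rt n i)) ^ m) / n \<le> (4 * real m * 2^m) * (ln (L n / cmod (A n \<omega>)) / n)) sequentially"
      using an
    proof eventually_elim
      case (elim n)
      have "cmod (\<Sum>i<n. (if cmod (rt n i) \<le> 1 then rt n i else 1 / cnj (rt n i)) ^ m) \<le> 4 * real m * 2^m * ln (L n / cmod (A n \<omega>))"
        by (rule poly_core(3)) (use rtnz[OF elim] elim circ[OF elim] m in auto)
      then show ?case by (simp add: divide_right_mono)
    qed
    show "(\<lambda>n. 0) \<longlonglongrightarrow> (0::real)" by simp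
    show "(\<lambda>n. (4 * real m * 2^m) * (ln (L n / cmod (A n \<omega>)) / n)) \<longlonglongrightarrow> 0"
      using tendsto_mult_right_zero[OF e1] by (simp add: L_def)
  qed
  have nz: "eventually (\<lambda>n. \<forall>i<n. rt n i \<noteq> 0) sequentially"
    using an by eventually_elim (use rtnz in auto)
  show ?thesis unfolding weak_conv_c_def
  proof (intro allI impI)
    fix f :: "complex \<Rightarrow> real" assume f: "continuous_on UNIV f \<and> bounded (range f)"
    have fm: "f \<in> borel_measurable borel" using f by (simp add: borel_measurable_continuous_onI)
    have lim: "(\<lambda>n. (\<Sum>i<n. f (rt n i)) / n) \<longlonglongrightarrow> Ic f"
      by (rule equi_det[OF nz lam momw]) (use f in auto)
    have "eventually (\<lambda>n. (\<Sum>i<n. f (rt n i)) / n = integral\<^sup>L (zero_counting_measure n (rand_poly A n \<omega>)) f) sequentially"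
      using an eventually_gt_at_top[of 0]
    proof eventually_elim
      case (elim n)
      have pn: "p n \<noteq> 0"
      proof
        assume "p n = 0"
        then have "coeff (p n) n = 0" by simp
        then show False using elim(1) by (simp add: p_def rand_poly_coeff)
      qed
      have sz: "size (proots (p n)) = n" using proots_p[OF elim(1)] by (simp add: size_decomp)
      have "integral\<^sup>L (zero_counting_measure n (p n)) f = sum_mset (image_mset f (proots (p n))) / n"
        by (rule zcm_integral[OF pn sz elim(2) fm])
      also have "\<dots> = (\<Sum>i<n. f (rt n i)) / n" using proots_p[OF elim(1)] by (simp add: sum_mset_decomp)
      finally show ?case by (simp add: p_def)
    qed
    then show "(\<lambda>n. integral\<^sup>L (zero_counting_measure n (rand_poly A n \<omega>)) f) \<longlonglongrightarrow> integral\<^sup>L unit_circle_measure f"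
      using lim circle_integral[of f] f by (simp add: Lim_transform_eventually)
  qed
qed



lemma zero_from_eps:
  fixes x :: "nat \<Rightarrow> real"
  assumes "\<And>\<epsilon>. \<epsilon> > 0 \<Longrightarrow> eventually (\<lambda>n. 0 \<le> x n \<and> x n \<le> \<epsilon>) sequentially"
  shows "x \<longlonglongrightarrow> 0"
  unfolding tendsto_iff
proof (intro allI impI)
  fix e :: real assume e: "e > 0"
  have "eventually (\<lambda>n. 0 \<le> x n \<and> x n \<le> e/2) sequentially" using assms[of "e/2"] e by simp
  then show "eventually (\<lambda>n. dist (x n) 0 < e) sequentially"
    by eventually_elim (use e in auto)
qed

lemma growth:
  fixes a :: "nat \<Rightarrow> real"
  assumes nn: "\<And>k. a k \<ge> 0" and a0: "a 0 > 0"
    and up: "\<And>\<epsilon>::real. \<epsilon> > 0 \<Longrightarrow> eventually (\<lambda>n. a n \<le> exp (\<epsilon> * n)) sequentially"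
    and low: "\<And>\<epsilon>::real. \<epsilon> > 0 \<Longrightarrow> eventually (\<lambda>n. a n \<ge> exp (- (\<epsilon> * n))) sequentially"
  shows "(\<lambda>n. ln ((\<Sum>k\<le>n. a k) / a n) / n) \<longlonglongrightarrow> 0"
    and "(\<lambda>n. ln ((\<Sum>k\<le>n. a k) / a 0) / n) \<longlonglongrightarrow> 0"
proof -
  define S where "S n = (\<Sum>k\<le>n. a k)" for n
  have Sge: "S n \<ge> a k" if "k \<le> n" for n k
    unfolding S_def using that nn by (intro member_le_sum) auto
  have Spos: "S n > 0" for n using Sge[of 0 n] a0 by simp
  have upS: "eventually (\<lambda>n. ln (S n) \<le> 2 * \<epsilon> * n) sequentially" if e: "\<epsilon> > 0" for \<epsilon> :: real
  proof -
    obtain K where K: "\<And>n. n \<ge> K \<Longrightarrow> a n \<le> exp (\<epsilon> * n)" using up[OF e] unfolding eventually_sequentially by blast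
    define C where "C = (\<Sum>k<K. a k)"
    have C: "C \<ge> 0" unfolding C_def using nn by (simp add: sum_nonneg)
    have Sb: "S n \<le> (C + 1) * (real n + 1) * exp (\<epsilon> * n)" for n
    proof -
      have "S n \<le> (\<Sum>k\<le>n. (if k < K then a k else 0) + exp (\<epsilon> * n))"
        unfolding S_def
      proof (intro sum_mono)
        fix k assume k: "k \<in> {..n}"
        show "a k \<le> (if k < K then a k else 0) + exp (\<epsilon> * n)"
        proof (cases "k < K")
          case True then show ?thesis by simp
        next
          case False
          then have "a k \<le> exp (\<epsilon> * k)" using K by simp
          also have "\<dots> \<le> exp (\<epsilon> * n)" using k e by auto
          finally show ?thesis using False by simp
        qed
      qed
      also have "\<dots> = (\<Sum>k\<le>n. (if k < K then a k else 0)) + (n + 1) * exp (\<epsilon> * n)"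
        by (simp add: sum.distrib)
      also have "(\<Sum>k\<le>n. (if k < K then a k else 0)) \<le> C"
      proof -
        have "(\<Sum>k\<le>n. (if k < K then a k else 0)) = (\<Sum>k\<in>{..n} \<inter> {..<K}. a k)"
          by (subst sum.inter_restrict) auto
        also have "\<dots> \<le> C" unfolding C_def using nn by (intro sum_mono2) auto
        finally show ?thesis .
      qed
      then have "(\<Sum>k\<le>n. (if k < K then a k else 0)) + (n + 1) * exp (\<epsilon> * n) \<le> C + (n + 1) * exp (\<epsilon> * n)"
        by simp
      also have "\<dots> \<le> (C + 1) * (real n + 1) * exp (\<epsilon> * n)"
      proof -
        have ex1: "exp (\<epsilon> * n) \<ge> 1" using e by simp
        have "1 * 1 \<le> (real n + 1) * exp (\<epsilon> * n)" using ex1 by (intro mult_mono) auto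
        then have "C * 1 \<le> C * ((real n + 1) * exp (\<epsilon> * n))" using C by (intro mult_left_mono) auto
        then have "C \<le> C * ((n + 1) * exp (\<epsilon> * n))" by (simp add: add.commute)
        then show ?thesis by (simp add: algebra_simps)
      qed
      finally show ?thesis .
    qed
    have lnS: "ln (S n) \<le> ln (C + 1) + ln (real n + 1) + \<epsilon> * n" for n
    proof -
      have "ln (S n) \<le> ln ((C + 1) * (real n + 1) * exp (\<epsilon> * n))"
        using Sb[of n] Spos[of n] by (subst ln_le_cancel_iff) auto
      also have "\<dots> = ln (C + 1) + ln (real n + 1) + \<epsilon> * n"
        using C by (simp add: ln_mult_pos)
      finally show ?thesis .
    qed
    have "eventually (\<lambda>n. ln (C + 1) + ln (real n + 1) \<le> \<epsilon> * n) sequentially"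
    proof -
      have "(\<lambda>n. (ln (C + 1) + ln (real n + 1)) / real n) \<longlonglongrightarrow> 0"
      proof -
        have "(\<lambda>n. ln (C + 1) / real n) \<longlonglongrightarrow> 0" by real_asymp
        moreover have "(\<lambda>n. ln (real n + 1) / real n) \<longlonglongrightarrow> 0" by real_asymp
        ultimately show ?thesis using tendsto_add by (fastforce simp: add_divide_distrib)
      qed
      then have "eventually (\<lambda>n. (ln (C + 1) + ln (real n + 1)) / real n < \<epsilon>) sequentially"
        using e by (rule order_tendstoD)
      then show ?thesis using eventually_gt_at_top[of 0]
        by eventually_elim (auto simp: divide_less_eq)
    qed
    then show ?thesis
    proof eventually_elim
      case (elim n) then show ?case using lnS[of n] by linarith
    qed
  qed
  show "(\<lambda>n. ln ((\<Sum>k\<le>n. a k) / a n) / n) \<longlonglongrightarrow> 0"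
  proof (rule zero_from_eps)
    fix \<epsilon> :: real assume e: "\<epsilon> > 0"
    have e4: "\<epsilon> / 4 > 0" using e by simp
    show "eventually (\<lambda>n. 0 \<le> ln ((\<Sum>k\<le>n. a k) / a n) / n \<and> ln ((\<Sum>k\<le>n. a k) / a n) / n \<le> \<epsilon>) sequentially"
      using upS[OF e4] low[OF e4] eventually_gt_at_top[of 0]
    proof eventually_elim
      case (elim n)
      have an: "a n > 0" using elim(2) by (smt (verit) exp_gt_zero)
      have "ln (a n) \<ge> - (\<epsilon> / 4 * n)" using elim(2) an by (metis ln_exp ln_le_cancel_iff exp_gt_zero)
      moreover have "\<epsilon> * n \<ge> 0" using e by simp
      moreover have "ln (S n / a n) = ln (S n) - ln (a n)" using an Spos[of n] by (rule ln_divide_pos[rotated])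
      ultimately have "ln (S n / a n) \<le> \<epsilon> * n" using elim(1) by linarith
      moreover have "ln (S n / a n) \<ge> 0" using Sge[of n n] an by simp
      ultimately show ?case using elim(3) by (auto simp: S_def divide_le_eq)
    qed
  qed
  show "(\<lambda>n. ln ((\<Sum>k\<le>n. a k) / a 0) / n) \<longlonglongrightarrow> 0"
  proof (rule zero_from_eps)
    fix \<epsilon> :: real assume e: "\<epsilon> > 0"
    have e4: "\<epsilon> / 4 > 0" using e by simp
    define d where "d = \<epsilon> / 2"
    have d: "d > 0" using e by (simp add: d_def)
    show "eventually (\<lambda>n. 0 \<le> ln ((\<Sum>k\<le>n. a k) / a 0) / n \<and> ln ((\<Sum>k\<le>n. a k) / a 0) / n \<le> \<epsilon>) sequentially"
      using upS[OF e4] eventually_gt_at_top[of 0] eventually_ge_at_top[of "nat \<lceil>- ln (a 0) / d\<rceil>"]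
    proof eventually_elim
      case (elim n)
      have "- ln (a 0) / d \<le> n" using elim(3) by linarith
      then have "(- ln (a 0) / d) * d \<le> n * d" using d by (intro mult_right_mono) auto
      then have l0: "- ln (a 0) \<le> d * n" using d by (simp add: mult.commute)
      have "ln (S n / a 0) = ln (S n) - ln (a 0)" using a0 Spos[of n] by (rule ln_divide_pos[rotated])
      then have "ln (S n / a 0) \<le> \<epsilon> * n" using elim(1) l0 unfolding d_def by linarith
      moreover have "ln (S n / a 0) \<ge> 0" using Sge[of 0 n] a0 by simp
      ultimately show ?case using elim(2) by (auto simp: S_def divide_le_eq)
    qed
  qed
qed

lemma summable_intervals:
  fixes h :: "real \<Rightarrow> real" and c lo hi :: "nat \<Rightarrow> real" and J :: "real set"
  assumes lohi: "\<And>n. lo n < hi n"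
    and disj: "\<And>m n. m \<noteq> n \<Longrightarrow> {lo m..<hi m} \<inter> {lo n..<hi n} = {}"
    and sub: "\<And>n. {lo n..<hi n} \<subseteq> J"
    and hb: "\<And>n x. x \<in> {lo n..<hi n} \<Longrightarrow> c n \<le> h x * (hi n - lo n)"
    and c0: "\<And>n. c n \<ge> 0"
    and fin: "(\<integral>\<^sup>+ x\<in>J. ennreal (h x) \<partial>lborel) < \<infinity>"
  shows "summable c"
proof (rule summable_suminf_not_top[OF c0])
  define st where "st n x = ennreal (c n / (hi n - lo n)) * indicator {lo n..<hi n} x" for n x
  have int_st: "(\<integral>\<^sup>+ x. st n x \<partial>lborel) = ennreal (c n)" for n
  proof -
    have "(\<integral>\<^sup>+ x. st n x \<partial>lborel) = ennreal (c n / (hi n - lo n)) * emeasure lborel {lo n..<hi n}"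
      unfolding st_def by (rule nn_integral_cmult_indicator) simp
    also have "\<dots> = ennreal (c n / (hi n - lo n)) * ennreal (hi n - lo n)"
      using lohi[of n] by simp
    also have "\<dots> = ennreal (c n)"
      using lohi[of n] c0[of n] by (simp add: ennreal_mult'[symmetric])
    finally show ?thesis .
  qed
  have pw: "(\<Sum>n. st n x) \<le> ennreal (h x) * indicator J x" for x
  proof (cases "\<exists>m. x \<in> {lo m..<hi m}")
    case True
    then obtain m where m: "x \<in> {lo m..<hi m}" by blast
    have "(\<Sum>n. st n x) = (\<Sum>n\<in>{m}. st n x)"
    proof (rule suminf_finite)
      fix n assume "n \<notin> {m}"
      then have "x \<notin> {lo n..<hi n}" using disj[of n m] m by auto
      then show "st n x = 0" by (simp add: st_def)
    qed simp
    also have "\<dots> = ennreal (c m / (hi m - lo m))" using m by (simp add: st_def)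
    also have "\<dots> \<le> ennreal (h x)"
    proof (intro ennreal_leI)
      show "c m / (hi m - lo m) \<le> h x" using hb[OF m] lohi[of m] by (simp add: divide_le_eq)
    qed
    also have "\<dots> = ennreal (h x) * indicator J x" using sub[of m] m by auto
    finally show ?thesis .
  next
    case False
    then have "st n x = 0" for n by (auto simp: st_def)
    then show ?thesis by simp
  qed
  have "(\<Sum>n. ennreal (c n)) = (\<Sum>n. \<integral>\<^sup>+ x. st n x \<partial>lborel)" by (simp add: int_st)
  also have "\<dots> = (\<integral>\<^sup>+ x. (\<Sum>n. st n x) \<partial>lborel)"
    by (rule nn_integral_suminf[symmetric]) (simp add: st_def)
  also have "\<dots> \<le> (\<integral>\<^sup>+ x. ennreal (h x) * indicator J x \<partial>lborel)"
    by (intro nn_integral_mono pw)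
  also have "\<dots> < \<infinity>" using fin by simp
  finally show "(\<Sum>n. ennreal (c n)) \<noteq> \<top>" by simp
qed

lemma tail_summable:
  fixes f :: "real \<Rightarrow> real" and a \<epsilon> :: real
  assumes a: "a > 1"
    and mono: "\<forall>x\<in>{a..}. \<forall>y\<in>{a..}. x \<le> y \<longrightarrow> f y \<le> f x"
    and rng: "\<forall>x\<in>{a..}. 0 \<le> f x \<and> f x \<le> 1"
    and fin: "(\<integral>\<^sup>+ x\<in>{a..}. ennreal (f x / x) \<partial>lborel) < \<infinity>"
    and e: "\<epsilon> > 0"
  shows "\<exists>N. summable (\<lambda>n. f (exp (\<epsilon> * real (n + N)))) \<and> (\<forall>n. exp (\<epsilon> * real (n + N)) \<ge> a)"
proof -
  define N where "N = nat \<lceil>ln a / \<epsilon>\<rceil> + 1"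
  have lnN: "ln a \<le> \<epsilon> * (real N - 1)"
  proof -
    have "ln a / \<epsilon> \<le> real N - 1" unfolding N_def by linarith
    then show ?thesis using e by (simp add: divide_le_eq mult.commute)
  qed
  have geA: "exp (\<epsilon> * (real (n + N) - 1)) \<ge> a" for n
  proof -
    have "ln a \<le> \<epsilon> * (real (n + N) - 1)" using lnN e by (smt (verit) of_nat_add of_nat_0_le_iff mult_left_mono)
    then show ?thesis using a by (metis exp_ln exp_le_cancel_iff less_trans zero_less_one)
  qed
  define lo where "lo n = exp (\<epsilon> * (real (n + N) - 1))" for n
  define hi where "hi n = exp (\<epsilon> * real (n + N))" for n
  define c where "c n = f (hi n) * (1 - exp (- \<epsilon>))" for n
  have lohi: "lo n < hi n" for n using e by (simp add: lo_def hi_def)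
  have hiA: "hi n \<ge> a" for n using geA[of n] lohi[of n] by (simp add: lo_def)
  have ratio: "lo n / hi n = exp (- \<epsilon>)" for n by (simp add: lo_def hi_def exp_diff[symmetric] algebra_simps)
  have "summable c"
  proof (rule summable_intervals[where lo = lo and hi = hi and J = "{a..}" and h = "\<lambda>x. f x / x"])
    show "lo n < hi n" for n by (rule lohi)
    show "{lo m..<hi m} \<inter> {lo n..<hi n} = {}" if "m \<noteq> n" for m n
    proof -
      have "hi m \<le> lo n" if "m < n" for m n
        using that e by (simp add: lo_def hi_def)
      then show ?thesis using \<open>m \<noteq> n\<close> by (cases "m < n") (auto simp: not_less dest: le_neq_implies_less)
    qed
    show "{lo n..<hi n} \<subseteq> {a..}" for n using geA[of n] by (auto simp: lo_def)
    show "c n \<le> f x / x * (hi n - lo n)" if x: "x \<in> {lo n..<hi n}" for n x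
    proof -
      have xa: "x \<ge> a" using x geA[of n] by (auto simp: lo_def)
      have xpos: "x > 0" using xa a by simp
      have fx: "f (hi n) \<le> f x" using mono xa hiA[of n] x by auto
      have f0: "f (hi n) \<ge> 0" using rng hiA[of n] by auto
      have hip: "hi n > 0" by (simp add: hi_def)
      have "c n = f (hi n) * (1 - lo n / hi n)" unfolding c_def ratio ..
      also have "\<dots> = f (hi n) * (hi n - lo n) / hi n" using hip by (simp add: field_simps)
      also have "\<dots> \<le> f x * (hi n - lo n) / hi n" using fx lohi[of n] hip by (intro divide_right_mono mult_right_mono) auto
      also have "\<dots> \<le> f x * (hi n - lo n) / x"
        using x xpos lohi[of n] fx f0 by (intro divide_left_mono) auto
      finally show ?thesis by simp
    qed
    show "c n \<ge> 0" for n using rng hiA[of n] e by (auto simp: c_def)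
    show "(\<integral>\<^sup>+ x\<in>{a..}. ennreal (f x / x) \<partial>lborel) < \<infinity>" by (rule fin)
  qed
  then have "summable (\<lambda>n. c n / (1 - exp (- \<epsilon>)))" by (rule summable_divide)
  moreover have "c n / (1 - exp (- \<epsilon>)) = f (exp (\<epsilon> * real (n + N)))" for n
    using e by (simp add: c_def hi_def)
  ultimately have "summable (\<lambda>n. f (exp (\<epsilon> * real (n + N))))" by simp
  then show ?thesis using hiA unfolding hi_def by blast
qed

lemma head_summable:
  fixes g :: "real \<Rightarrow> real" and b \<epsilon> :: real
  assumes b: "0 < b" "b < 1"
    and mono: "\<forall>x\<in>{0..b}. \<forall>y\<in>{0..b}. x \<le> y \<longrightarrow> g x \<le> g y"
    and rng: "\<forall>x\<in>{0..b}. 0 \<le> g x \<and> g x \<le> 1"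
    and fin: "(\<integral>\<^sup>+ x\<in>{0..b}. ennreal (g x / x) \<partial>lborel) < \<infinity>"
    and e: "\<epsilon> > 0"
  shows "\<exists>N. summable (\<lambda>n. g (exp (- (\<epsilon> * real (n + N))))) \<and> (\<forall>n. exp (- (\<epsilon> * real (n + N))) \<le> b)"
proof -
  define N where "N = nat \<lceil>- ln b / \<epsilon>\<rceil> + 1"
  have lnN: "- ln b \<le> \<epsilon> * (real N - 1)"
  proof -
    have "- ln b / \<epsilon> \<le> real N - 1" unfolding N_def by linarith
    then have "(- ln b / \<epsilon>) * \<epsilon> \<le> (real N - 1) * \<epsilon>" using e by (intro mult_right_mono) auto
    then show ?thesis using e by (simp add: mult.commute)
  qed
  have leB: "exp (- (\<epsilon> * (real (n + N) - 1))) \<le> b" for n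
  proof -
    have "- ln b \<le> \<epsilon> * (real (n + N) - 1)" using lnN e by (smt (verit) of_nat_add of_nat_0_le_iff mult_left_mono)
    then have "- (\<epsilon> * (real (n + N) - 1)) \<le> ln b" by linarith
    then show ?thesis using b by (metis exp_ln exp_le_cancel_iff)
  qed
  define lo where "lo n = exp (- (\<epsilon> * real (n + N)))" for n
  define hi where "hi n = exp (- (\<epsilon> * (real (n + N) - 1)))" for n
  define c where "c n = g (lo n) * (1 - exp (- \<epsilon>))" for n
  have lohi: "lo n < hi n" for n using e by (simp add: lo_def hi_def)
  have loB: "lo n \<le> b" for n using leB[of n] lohi[of n] by (simp add: hi_def)
  have lo0: "lo n > 0" for n by (simp add: lo_def)
  have ratio: "lo n / hi n = exp (- \<epsilon>)" for n by (simp add: lo_def hi_def exp_diff[symmetric] algebra_simps)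
  have "summable c"
  proof (rule summable_intervals[where lo = lo and hi = hi and J = "{0..b}" and h = "\<lambda>x. g x / x"])
    show "lo n < hi n" for n by (rule lohi)
    show "{lo m..<hi m} \<inter> {lo n..<hi n} = {}" if "m \<noteq> n" for m n
    proof -
      have "hi n \<le> lo m" if "m < n" for m n
        using that e by (simp add: lo_def hi_def)
      then show ?thesis using \<open>m \<noteq> n\<close> by (cases "m < n") (auto simp: not_less dest: le_neq_implies_less)
    qed
    show "{lo n..<hi n} \<subseteq> {0..b}" for n using leB[of n] lo0[of n] by (auto simp: hi_def)
    show "c n \<le> g x / x * (hi n - lo n)" if x: "x \<in> {lo n..<hi n}" for n x
    proof -
      have xb: "x \<le> b" using x leB[of n] by (auto simp: hi_def)
      have xpos: "x > 0" using x lo0[of n] by auto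
      have hip: "hi n > 0" by (simp add: hi_def)
      have gx: "g (lo n) \<le> g x" using mono xb loB[of n] lo0[of n] x by auto
      have g0: "g (lo n) \<ge> 0" using rng loB[of n] lo0[of n] by auto
      have "c n = g (lo n) * (1 - lo n / hi n)" unfolding c_def ratio ..
      also have "\<dots> = g (lo n) * (hi n - lo n) / hi n" using hip by (simp add: field_simps)
      also have "\<dots> \<le> g x * (hi n - lo n) / hi n" using gx lohi[of n] hip by (intro divide_right_mono mult_right_mono) auto
      also have "\<dots> \<le> g x * (hi n - lo n) / x"
        using x xpos lohi[of n] gx g0 by (intro divide_left_mono) auto
      finally show ?thesis by simp
    qed
    show "c n \<ge> 0" for n using rng loB[of n] lo0[of n] e by (auto simp: c_def)
    show "(\<integral>\<^sup>+ x\<in>{0..b}. ennreal (g x / x) \<partial>lborel) < \<infinity>" by (rule fin)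
  qed
  then have "summable (\<lambda>n. c n / (1 - exp (- \<epsilon>)))" by (rule summable_divide)
  moreover have "c n / (1 - exp (- \<epsilon>)) = g (exp (- (\<epsilon> * real (n + N))))" for n
    using e by (simp add: c_def lo_def)
  ultimately have "summable (\<lambda>n. g (exp (- (\<epsilon> * real (n + N)))))" by simp
  then show ?thesis using loB unfolding lo_def by blast
qed

lemma AE_upper:
  fixes M :: "'a measure" and A :: "nat \<Rightarrow> 'a \<Rightarrow> complex" and f :: "real \<Rightarrow> real"
  assumes P: "prob_space M" and meas: "\<And>k. A k \<in> borel_measurable M"
    and a: "a > 1"
    and mono: "\<forall>x\<in>{a..}. \<forall>y\<in>{a..}. x \<le> y \<longrightarrow> f y \<le> f x"
    and rng: "\<forall>x\<in>{a..}. 0 \<le> f x \<and> f x \<le> 1"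
    and fin: "(\<integral>\<^sup>+ x\<in>{a..}. ennreal (f x / x) \<partial>lborel) < \<infinity>"
    and tail: "\<forall>x\<in>{a..}. \<forall>k. 1 - dist_fun M A k x \<le> f x"
    and e: "\<epsilon> > 0"
  shows "AE \<omega> in M. eventually (\<lambda>n. cmod (A n \<omega>) \<le> exp (\<epsilon> * real n)) sequentially"
proof -
  interpret prob_space M by fact
  have [measurable]: "A k \<in> borel_measurable M" for k by (rule meas)
  obtain N where sN: "summable (\<lambda>n. f (exp (\<epsilon> * real (n + N))))" and gA: "\<And>n. exp (\<epsilon> * real (n + N)) \<ge> a"
    using tail_summable[OF a mono rng fin e] by blast
  define E where "E n = {\<omega> \<in> space M. exp (\<epsilon> * real n) < cmod (A n \<omega>)}" for n
  have Ems[measurable]: "E n \<in> sets M" for n unfolding E_def by measurable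
  have PE: "prob (E n) = 1 - dist_fun M A n (exp (\<epsilon> * real n))" for n
  proof -
    have "space M - E n = {\<omega> \<in> space M. cmod (A n \<omega>) \<le> exp (\<epsilon> * real n)}" by (auto simp: E_def)
    then have "dist_fun M A n (exp (\<epsilon> * real n)) = prob (space M - E n)" by (simp add: dist_fun_def)
    also have "\<dots> = 1 - prob (E n)" by (rule prob_compl) simp
    finally show ?thesis by simp
  qed
  have "summable (\<lambda>n. prob (E (n + N)))"
  proof (rule summable_comparison_test_ev[OF always_eventually sN], intro allI)
    fix n
    have "prob (E (n + N)) \<le> f (exp (\<epsilon> * real (n + N)))" unfolding PE using tail gA[of n] by auto
    then show "norm (prob (E (n + N))) \<le> f (exp (\<epsilon> * real (n + N)))" by simp
  qed
  then have sE: "summable (\<lambda>n. measure M (E n))" using summable_iff_shift[of "\<lambda>n. measure M (E n)" N] by simp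
  have "AE x in M. eventually (\<lambda>n. x \<in> space M - E n) sequentially"
    by (rule borel_cantelli_AE1[OF Ems _ sE]) (simp add: less_top[symmetric])
  then show ?thesis
    by (rule eventually_mono) (auto elim!: eventually_mono simp: E_def not_less)
qed

lemma AE_lower:
  fixes M :: "'a measure" and A :: "nat \<Rightarrow> 'a \<Rightarrow> complex" and g :: "real \<Rightarrow> real"
  assumes P: "prob_space M" and meas: "\<And>k. A k \<in> borel_measurable M"
    and b: "0 < b" "b < 1"
    and mono: "\<forall>x\<in>{0..b}. \<forall>y\<in>{0..b}. x \<le> y \<longrightarrow> g x \<le> g y"
    and rng: "\<forall>x\<in>{0..b}. 0 \<le> g x \<and> g x \<le> 1"
    and fin: "(\<integral>\<^sup>+ x\<in>{0..b}. ennreal (g x / x) \<partial>lborel) < \<infinity>"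
    and head: "\<forall>x\<in>{0..b}. \<forall>k. dist_fun M A k x \<le> g x"
    and e: "\<epsilon> > 0"
  shows "AE \<omega> in M. eventually (\<lambda>n. cmod (A n \<omega>) \<ge> exp (- (\<epsilon> * real n))) sequentially"
proof -
  interpret prob_space M by fact
  have [measurable]: "A k \<in> borel_measurable M" for k by (rule meas)
  obtain N where sN: "summable (\<lambda>n. g (exp (- (\<epsilon> * real (n + N)))))" and gB: "\<And>n. exp (- (\<epsilon> * real (n + N))) \<le> b"
    using head_summable[OF b mono rng fin e] by blast
  define E where "E n = {\<omega> \<in> space M. cmod (A n \<omega>) < exp (- (\<epsilon> * real n))}" for n
  have Ems[measurable]: "E n \<in> sets M" for n unfolding E_def by measurable
  have PE: "prob (E n) \<le> dist_fun M A n (exp (- (\<epsilon> * real n)))" for n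
    unfolding dist_fun_def E_def by (rule finite_measure_mono) auto
  have "summable (\<lambda>n. prob (E (n + N)))"
  proof (rule summable_comparison_test_ev[OF always_eventually sN], intro allI)
    fix n
    have "exp (- (\<epsilon> * real (n + N))) \<in> {0..b}" using gB[of n] by simp
    then have "dist_fun M A (n + N) (exp (- (\<epsilon> * real (n + N)))) \<le> g (exp (- (\<epsilon> * real (n + N))))" using head by blast
    then have "prob (E (n + N)) \<le> g (exp (- (\<epsilon> * real (n + N))))" using PE[of "n + N"] by linarith
    then show "norm (prob (E (n + N))) \<le> g (exp (- (\<epsilon> * real (n + N))))" by simp
  qed
  then have sE: "summable (\<lambda>n. measure M (E n))" using summable_iff_shift[of "\<lambda>n. measure M (E n)" N] by simp
  have "AE x in M. eventually (\<lambda>n. x \<in> space M - E n) sequentially"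
    by (rule borel_cantelli_AE1[OF Ems _ sE]) (simp add: less_top[symmetric])
  then show ?thesis
    by (rule eventually_mono) (auto elim!: eventually_mono simp: E_def not_less)
qed

lemma AE_A0:
  fixes M :: "'a measure" and A :: "nat \<Rightarrow> 'a \<Rightarrow> complex" and g :: "real \<Rightarrow> real"
  assumes P: "prob_space M" and meas: "\<And>k. A k \<in> borel_measurable M"
    and b: "0 < b" "b < 1"
    and mono: "\<forall>x\<in>{0..b}. \<forall>y\<in>{0..b}. x \<le> y \<longrightarrow> g x \<le> g y"
    and rng: "\<forall>x\<in>{0..b}. 0 \<le> g x \<and> g x \<le> 1"
    and fin: "(\<integral>\<^sup>+ x\<in>{0..b}. ennreal (g x / x) \<partial>lborel) < \<infinity>"
    and head: "\<forall>x\<in>{0..b}. \<forall>k. dist_fun M A k x \<le> g x"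
  shows "AE \<omega> in M. A 0 \<omega> \<noteq> 0"
proof -
  interpret prob_space M by fact
  have [measurable]: "A k \<in> borel_measurable M" for k by (rule meas)
  obtain N where sN: "summable (\<lambda>n. g (exp (- (1 * real (n + N)))))" and gB: "\<And>n. exp (- (1 * real (n + N))) \<le> b"
    using head_summable[OF b mono rng fin, of 1] by auto
  define Z where "Z = {\<omega> \<in> space M. A 0 \<omega> = 0}"
  have Zm[measurable]: "Z \<in> sets M" unfolding Z_def by measurable
  have le: "prob Z \<le> g (exp (- (1 * real (n + N))))" for n
  proof -
    have "prob Z \<le> dist_fun M A 0 (exp (- (1 * real (n + N))))"
      unfolding dist_fun_def Z_def by (rule finite_measure_mono) auto
    also have "\<dots> \<le> g (exp (- (1 * real (n + N))))" using head gB[of n] by auto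
    finally show ?thesis .
  qed
  have "(\<lambda>n. g (exp (- (1 * real (n + N))))) \<longlonglongrightarrow> 0" by (rule summable_LIMSEQ_zero[OF sN])
  then have "prob Z \<le> 0" using le by (intro LIMSEQ_le_const) auto
  then have "prob Z = 0" using measure_nonneg[of M Z] by linarith
  then have "emeasure M Z = 0" by (simp add: emeasure_eq_measure)
  then have "Z \<in> null_sets M" using Zm by auto
  then show ?thesis by (rule AE_I') (auto simp: Z_def)
qed

theorem theorem2p1:
  fixes M :: "'a measure" and A :: "nat \<Rightarrow> 'a \<Rightarrow> complex"
  assumes "prob_space M"
    and "\<And>k. A k \<in> borel_measurable M"
    and "\<exists>a::real. \<exists>f::real \<Rightarrow> real. a > 1 \<and>
           (\<forall>x\<in>{a..}. \<forall>y\<in>{a..}. x \<le> y \<longrightarrow> f y \<le> f x) \<and>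
           (\<forall>x\<in>{a..}. 0 \<le> f x \<and> f x \<le> 1) \<and>
           (\<integral>\<^sup>+ x\<in>{a..}. ennreal (f x / x) \<partial>lborel) < \<infinity> \<and>
           (\<forall>x\<in>{a..}. \<forall>k. 1 - dist_fun M A k x \<le> f x)"
    and "\<exists>b::real. \<exists>g::real \<Rightarrow> real. 0 < b \<and> b < 1 \<and>
           (\<forall>x\<in>{0..b}. \<forall>y\<in>{0..b}. x \<le> y \<longrightarrow> g x \<le> g y) \<and>
           (\<forall>x\<in>{0..b}. 0 \<le> g x \<and> g x \<le> 1) \<and>
           (\<integral>\<^sup>+ x\<in>{0..b}. ennreal (g x / x) \<partial>lborel) < \<infinity> \<and>
           (\<forall>x\<in>{0..b}. \<forall>k. dist_fun M A k x \<le> g x)"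
  shows "AE \<omega> in M. weak_conv_c
           (\<lambda>n. zero_counting_measure n (rand_poly A n \<omega>)) unit_circle_measure"
proof -
  obtain a f where a: "a > 1"
    and fm: "\<forall>x\<in>{a..}. \<forall>y\<in>{a..}. x \<le> y \<longrightarrow> f y \<le> f x"
    and fr: "\<forall>x\<in>{a..}. 0 \<le> f x \<and> f x \<le> 1"
    and ff: "(\<integral>\<^sup>+ x\<in>{a..}. ennreal (f x / x) \<partial>lborel) < \<infinity>"
    and ft: "\<forall>x\<in>{a..}. \<forall>k. 1 - dist_fun M A k x \<le> f x"
    using assms(3) by blast
  obtain b g where b: "0 < b" "b < 1"
    and gm: "\<forall>x\<in>{0..b}. \<forall>y\<in>{0..b}. x \<le> y \<longrightarrow> g x \<le> g y"
    and gr: "\<forall>x\<in>{0..b}. 0 \<le> g x \<and> g x \<le> 1"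
    and gf: "(\<integral>\<^sup>+ x\<in>{0..b}. ennreal (g x / x) \<partial>lborel) < \<infinity>"
    and gt: "\<forall>x\<in>{0..b}. \<forall>k. dist_fun M A k x \<le> g x"
    using assms(4) by blast
  have up: "AE \<omega> in M. \<forall>j::nat. eventually (\<lambda>n. cmod (A n \<omega>) \<le> exp (inverse (real (Suc j)) * real n)) sequentially"
    unfolding AE_all_countable by (intro allI AE_upper[OF assms(1,2) a fm fr ff ft]) simp
  have low: "AE \<omega> in M. \<forall>j::nat. eventually (\<lambda>n. cmod (A n \<omega>) \<ge> exp (- (inverse (real (Suc j)) * real n))) sequentially"
    unfolding AE_all_countable by (intro allI AE_lower[OF assms(1,2) b gm gr gf gt]) simp
  have z: "AE \<omega> in M. A 0 \<omega> \<noteq> 0" by (rule AE_A0[OF assms(1,2) b gm gr gf gt])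
  show ?thesis using up low z
  proof eventually_elim
    case (elim \<omega>)
    define c where "c k = cmod (A k \<omega>)" for k
    have upe: "eventually (\<lambda>n. c n \<le> exp (\<epsilon> * n)) sequentially" if e: "\<epsilon> > 0" for \<epsilon> :: real
    proof -
      obtain j where j: "inverse (real (Suc j)) < \<epsilon>" using reals_Archimedean[OF e] by blast
      show ?thesis using elim(1)
      proof (elim allE[of _ j] eventually_mono)
        fix n assume "cmod (A n \<omega>) \<le> exp (inverse (real (Suc j)) * real n)"
        also have "\<dots> \<le> exp (\<epsilon> * n)" using j by (intro exp_mono mult_right_mono) auto
        finally show "c n \<le> exp (\<epsilon> * n)" by (simp add: c_def)
      qed
    qed
    have lowe: "eventually (\<lambda>n. c n \<ge> exp (- (\<epsilon> * n))) sequentially" if e: "\<epsilon> > 0" for \<epsilon> :: real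
    proof -
      obtain j where j: "inverse (real (Suc j)) < \<epsilon>" using reals_Archimedean[OF e] by blast
      show ?thesis using elim(2)
      proof (elim allE[of _ j] eventually_mono)
        fix n assume h: "cmod (A n \<omega>) \<ge> exp (- (inverse (real (Suc j)) * real n))"
        have "exp (- (\<epsilon> * n)) \<le> exp (- (inverse (real (Suc j)) * real n))" using j by (intro exp_mono) (auto intro: mult_right_mono)
        also note h
        finally show "c n \<ge> exp (- (\<epsilon> * n))" by (simp add: c_def)
      qed
    qed
    have c0: "c 0 > 0" using elim(3) by (simp add: c_def)
    have an: "eventually (\<lambda>n. A n \<omega> \<noteq> 0) sequentially"
      using lowe[of 1] by (rule eventually_mono) (auto simp: c_def dest: order.strict_trans2[OF exp_gt_zero])
    have g1: "(\<lambda>n. ln ((\<Sum>k\<le>n. c k) / c n) / n) \<longlonglongrightarrow> 0"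
      by (rule growth(1)) (use c0 upe lowe in \<open>auto simp: c_def\<close>)
    have g2: "(\<lambda>n. ln ((\<Sum>k\<le>n. c k) / c 0) / n) \<longlonglongrightarrow> 0"
      by (rule growth(2)) (use c0 upe lowe in \<open>auto simp: c_def\<close>)
    show ?case by (rule det_main[of A \<omega>, OF elim(3) an]) (use g1 g2 in \<open>simp_all add: c_def\<close>)
  qed
qed


end
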